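(* Let $(a(l))_{l\ge0}$ be generated by SGG with activation probability $p\in[0,1]$ on a connected graph from an initial state $a(0)\ne\bar a$, and let $E_l=\mathbb E\|a(l)-\bar a\|^2$. Define $\eta_l=\mathbb E\big[R_{SGG}(a(l-1);p)-R_{RG}(a(l-1))\big]$ and $\beta_l=\eta_l/E_{l-1}$ if $E_{l-1}>0$, $\beta_l=0$ otherwise. Then for all $l\ge1$: $\beta_l\ge0$, $$E_l\le\big(\lambda_2(\overline W)-\beta_l\big)E_{l-1},\qquad E_l\le \|a(0)-\bar a\|^2\prod_{i=1}^l\big(\lambda_2(\overline W)-\beta_i\big)\le\|a(0)-\bar a\|^2\Big(\lambda_2(\overline W)-\min_{1\le i\le l}\beta_i\Big)^l,$$ and for every $\epsilon\in(0,1)$, $$\Pr\Big(\tfrac{\|a(l)-\bar a\|}{\|a(0)-\bar a\|}\ge\epsilon\Big)\le\epsilon^{-2}\Big(\lambda_2(\overline W)-\min_{1\le i\le l}\beta_i\Big)^l .$$ Consequently, if $\rho_l:=\lambda_2(\overline W)-\min_{1\le i\le l}\beta_i>0$ and $l\ge \dfrac{3\log\epsilon^{-1}}{\log \rho_l^{-1}}$, then $\Pr\big(\|a(l)-\bar a\|/\|a(0)-\bar a\|\ge\epsilon\big)\le\epsilon$; i.e. the $\epsilon$-averaging time of SGG is at most $3\log\epsilon^{-1}/\log\big(\lambda_2(\overline W)-\min_i\beta_i\big)^{-1}$.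
   Context: Connected undirected graph on $\mathcal V=\{1,\dots,N\}$, $N\ge2$, neighbour sets $\mathcal N_s$ (excluding $s$). $\bar a$ is the vector with all entries $\frac1N\sum_s a_s(0)$. SGG step: node $s$ uniform on $\mathcal V$; each $t\in\mathcal N_s$ independently active with probability $p$; partner $t^*$ maximises $(a_s(l-1)-a_t(l-1))^2$ over active neighbours, or is uniform on $\mathcal N_s$ if none is active; then $a_s(l)=a_{t^*}(l)=\frac12(a_s(l-1)+a_{t^*}(l-1))$, others unchanged. $R_{RG}(x)=\frac1{2N}\sum_{s}\frac1{|\mathcal N_s|}\sum_{t\in\mathcal N_s}(x_s-x_t)^2$; $R_{SGG}(x;p)=\frac1{2N}\sum_{s}\Big[\sum_{\emptyset\ne A\subseteq\mathcal N_s}p^{|A|}(1-p)^{|\mathcal N_s|-|A|}\max_{t\in A}(x_s-x_t)^2+(1-p)^{|\mathcal N_s|}\frac1{|\mathcal N_s|}\sum_{t\in\mathcal N_s}(x_s-x_t)^2\Big]$. Randomised gossip matrix: for $(s,t)$ with $t\in\mathcal N_s$, $W_{st}=I-\frac12(e_s-e_t)(e_s-e_t)^T$ ($e_i$ standard basis vectors), and $\overline W=\frac1N\sum_{s=1}^N\frac1{|\mathcal N_s|}\sum_{t\in\mathcal N_s}W_{st}$ is the expected one-step update matrix of randomised gossip (node $s$ uniform, partner uniform in $\mathcal N_s$). $\lambda_2(\overline W)$ denotes the second largest eigenvalue of the symmetric matrix $\overline W$. *)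

theory Defs
  imports "HOL-Analysis.Analysis" "HOL-Probability.Probability"
          "HOL-Computational_Algebra.Polynomial"
begin

text \<open>Vertices: a finite type 'n (so V = UNIV, N = CARD('n)); states are vectors real^'n.
  The graph is given by a symmetric irreflexive adjacency relation E.\<close>

definition nbrs :: "('n \<Rightarrow> 'n \<Rightarrow> bool) \<Rightarrow> 'n \<Rightarrow> 'n set" where
  "nbrs E s = {t. E s t}"

definition connected_graph :: "('n::finite \<Rightarrow> 'n \<Rightarrow> bool) \<Rightarrow> bool" where
  "connected_graph E \<longleftrightarrow> (\<forall>s t. E s t \<longleftrightarrow> E t s) \<and> (\<forall>s. \<not> E s s) \<and> (\<forall>s t. E\<^sup>*\<^sup>* s t)"

definition avg_vec :: "real^'n \<Rightarrow> real^'n::finite" where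
  "avg_vec a = (\<chi> i. (\<Sum>j\<in>UNIV. a $ j) / real CARD('n))"

definition avg_upd :: "real^'n \<Rightarrow> 'n \<Rightarrow> 'n \<Rightarrow> real^'n" where
  "avg_upd x s t = (\<chi> i. if i = s \<or> i = t then (x $ s + x $ t) / 2 else x $ i)"

definition partner_pmf :: "('n::finite \<Rightarrow> 'n \<Rightarrow> bool) \<Rightarrow> real \<Rightarrow> real^'n \<Rightarrow> 'n \<Rightarrow> 'n pmf" where
  "partner_pmf E p x s =
     bind_pmf (Pi_pmf (nbrs E s) False (\<lambda>_. bernoulli_pmf p))
       (\<lambda>f. let A = {t \<in> nbrs E s. f t} in
            if A = {} then pmf_of_set (nbrs E s)
            else pmf_of_set {t \<in> A. \<forall>u\<in>A. (x $ s - x $ u)\<^sup>2 \<le> (x $ s - x $ t)\<^sup>2})"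

definition sgg_step :: "('n::finite \<Rightarrow> 'n \<Rightarrow> bool) \<Rightarrow> real \<Rightarrow> real^'n \<Rightarrow> (real^'n) pmf" where
  "sgg_step E p x = bind_pmf (pmf_of_set UNIV) (\<lambda>s. map_pmf (avg_upd x s) (partner_pmf E p x s))"

primrec sgg_dist :: "('n::finite \<Rightarrow> 'n \<Rightarrow> bool) \<Rightarrow> real \<Rightarrow> real^'n \<Rightarrow> nat \<Rightarrow> (real^'n) pmf" where
  "sgg_dist E p a0 0 = return_pmf a0"
| "sgg_dist E p a0 (Suc l) = bind_pmf (sgg_dist E p a0 l) (sgg_step E p)"

definition R_RG :: "('n::finite \<Rightarrow> 'n \<Rightarrow> bool) \<Rightarrow> real^'n \<Rightarrow> real" where
  "R_RG E x = 1 / (2 * real CARD('n)) *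
     (\<Sum>s\<in>UNIV. 1 / real (card (nbrs E s)) * (\<Sum>t\<in>nbrs E s. (x $ s - x $ t)\<^sup>2))"

definition R_SGG :: "('n::finite \<Rightarrow> 'n \<Rightarrow> bool) \<Rightarrow> real^'n \<Rightarrow> real \<Rightarrow> real" where
  "R_SGG E x p = 1 / (2 * real CARD('n)) *
     (\<Sum>s\<in>UNIV.
        (\<Sum>A\<in>Pow (nbrs E s) - {{}}.
            p ^ card A * (1 - p) ^ (card (nbrs E s) - card A) * Max ((\<lambda>t. (x $ s - x $ t)\<^sup>2) ` A))
        + (1 - p) ^ card (nbrs E s) * (1 / real (card (nbrs E s)) * (\<Sum>t\<in>nbrs E s. (x $ s - x $ t)\<^sup>2)))"

definition outer :: "real^'n \<Rightarrow> real^'n \<Rightarrow> real^'n^'n" where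
  "outer u v = (\<chi> i j. u $ i * v $ j)"

definition W_edge :: "'n::finite \<Rightarrow> 'n \<Rightarrow> real^'n^'n" where
  "W_edge s t = mat 1 - (1/2) *\<^sub>R outer (axis s 1 - axis t 1) (axis s 1 - axis t 1)"

definition W_bar :: "('n::finite \<Rightarrow> 'n \<Rightarrow> bool) \<Rightarrow> real^'n^'n" where
  "W_bar E = (1 / real CARD('n)) *\<^sub>R
     (\<Sum>s\<in>UNIV. (1 / real (card (nbrs E s))) *\<^sub>R (\<Sum>t\<in>nbrs E s. W_edge s t))"

text \<open>Characteristic polynomial det(X I - A) and the second largest eigenvalue,
  eigenvalues counted with (algebraic) multiplicity.\<close>
definition charpoly :: "real^'n^'n \<Rightarrow> real poly" where
  "charpoly A = det (\<chi> i j. (if i = j then [:0, 1:] else 0) - [:A $ i $ j:])"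

definition eigenvalues :: "real^'n^'n \<Rightarrow> real set" where
  "eigenvalues A = {\<mu>. poly (charpoly A) \<mu> = 0}"

definition lambda2 :: "real^'n^'n \<Rightarrow> real" where
  "lambda2 A = Max {\<mu> \<in> eigenvalues A.
      (\<Sum>\<nu>\<in>{\<nu> \<in> eigenvalues A. \<mu> \<le> \<nu>}. order \<nu> (charpoly A)) \<ge> 2}"

definition sgg_E :: "('n::finite \<Rightarrow> 'n \<Rightarrow> bool) \<Rightarrow> real \<Rightarrow> real^'n \<Rightarrow> nat \<Rightarrow> real" where
  "sgg_E E p a0 l = measure_pmf.expectation (sgg_dist E p a0 l) (\<lambda>x. (norm (x - avg_vec a0))\<^sup>2)"

definition sgg_eta :: "('n::finite \<Rightarrow> 'n \<Rightarrow> bool) \<Rightarrow> real \<Rightarrow> real^'n \<Rightarrow> nat \<Rightarrow> real" where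
  "sgg_eta E p a0 l = measure_pmf.expectation (sgg_dist E p a0 (l - 1)) (\<lambda>x. R_SGG E x p - R_RG E x)"

definition sgg_beta :: "('n::finite \<Rightarrow> 'n \<Rightarrow> bool) \<Rightarrow> real \<Rightarrow> real^'n \<Rightarrow> nat \<Rightarrow> real" where
  "sgg_beta E p a0 l = (if sgg_E E p a0 (l - 1) > 0 then sgg_eta E p a0 l / sgg_E E p a0 (l - 1) else 0)"

end

theory Submission
  imports Defs
begin


definition symm :: "real^'n^'n \<Rightarrow> bool" where
  "symm M \<longleftrightarrow> (\<forall>i j. M$i$j = M$j$i)"

lemma symm_transpose: "symm M \<Longrightarrow> Finite_Cartesian_Product.transpose M = M"
  by (simp add: symm_def Finite_Cartesian_Product.transpose_def vec_eq_iff)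

lemma symm_inner: assumes "symm M" shows "(M *v x) \<bullet> y = x \<bullet> (M *v y)"
proof -
  have "(M *v x) \<bullet> y = (x v* Finite_Cartesian_Product.transpose M) \<bullet> y"
    by (simp add: vector_transpose_matrix)
  also have "\<dots> = x \<bullet> (M *v y)" using symm_transpose[OF assms] by (simp add: dot_lmul_matrix)
  finally show ?thesis .
qed

lemma cont_qf: "continuous_on S (\<lambda>z::real^'n. z \<bullet> (M *v z))"
proof -
  have "linear ((*v) M)" by (simp add: matrix_vector_mul_linear)
  hence "continuous_on S ((*v) M)" by (simp add: linear_continuous_on linear_conv_bounded_linear)
  thus ?thesis by (intro continuous_intros)
qed

lemma eigen_exists:
  fixes M :: "real^'n^'n"
  assumes sym: "symm M" and U: "subspace U" and inv: "\<forall>x\<in>U. M *v x \<in> U" and ne: "U \<noteq> {0}"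
  obtains v where "v \<in> U" "norm v = 1" "M *v v = (v \<bullet> (M *v v)) *\<^sub>R v"
proof -
  define f where "f z = z \<bullet> (M *v z)" for z :: "real^'n"
  define S where "S = sphere (0::real^'n) 1 \<inter> U"
  have cS: "compact S" unfolding S_def
    by (intro compact_Int_closed compact_sphere closed_subspace U)
  obtain u where u: "u \<in> U" "u \<noteq> 0" using ne subspace_0[OF U] by blast
  have "(1/norm u) *\<^sub>R u \<in> S" using u U unfolding S_def by (auto simp: subspace_scale)
  hence Sne: "S \<noteq> {}" by blast
  obtain v where v: "v \<in> S" and vmax: "\<And>y. y \<in> S \<Longrightarrow> f y \<le> f v"
    using continuous_attains_sup[OF cS Sne cont_qf[of S M]] unfolding f_def by blast
  have vU: "v \<in> U" and nv: "norm v = 1" using v by (auto simp: S_def)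
  have vv: "v \<bullet> v = 1" using nv by (simp add: dot_square_norm)
  have hom: "f z \<le> f v * (z \<bullet> z)" if "z \<in> U" for z
  proof (cases "z = 0")
    case True thus ?thesis by (simp add: f_def)
  next
    case False
    define z' where "z' = (1/norm z) *\<^sub>R z"
    have "z' \<in> S" using False that U by (auto simp: S_def z'_def subspace_scale)
    hence "f z' \<le> f v" by (rule vmax)
    moreover have "f z' = f z / (norm z)^2"
      by (simp add: f_def z'_def matrix_vector_mult_scaleR power2_eq_square)
    moreover have "z \<bullet> z = (norm z)^2" by (simp add: dot_square_norm)
    moreover have "(norm z)^2 > 0" using False by simp
    ultimately show ?thesis by (simp add: divide_le_eq mult.commute)
  qed
  define w where "w = M *v v - f v *\<^sub>R v"
  have wU: "w \<in> U" unfolding w_def using inv vU U by (simp add: subspace_diff subspace_scale)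
  have vw: "v \<bullet> w = 0" unfolding w_def f_def by (simp add: inner_diff_right vv)
  have wMv: "w \<bullet> (M *v v) = w \<bullet> w"
  proof -
    have "M *v v = w + f v *\<^sub>R v" by (simp add: w_def)
    hence "w \<bullet> (M *v v) = w \<bullet> w + f v * (w \<bullet> v)" by (simp add: inner_add_right)
    thus ?thesis using vw by (simp add: inner_commute)
  qed
  have key: "2 * t * (w \<bullet> w) \<le> t^2 * (f v * (w \<bullet> w) - f w)" for t :: real
  proof -
    have zU: "v + t *\<^sub>R w \<in> U" using vU wU U by (simp add: subspace_add subspace_scale)
    have "f (v + t *\<^sub>R w) = f v + 2 * t * (w \<bullet> (M *v v)) + t^2 * f w"
    proof -
      have "v \<bullet> (M *v w) = w \<bullet> (M *v v)"
        using symm_inner[OF sym, of v w] by (simp add: inner_commute)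
      thus ?thesis unfolding f_def
        by (simp add: matrix_vector_right_distrib matrix_vector_mult_scaleR inner_add_left
            inner_add_right power2_eq_square algebra_simps)
    qed
    moreover have "(v + t *\<^sub>R w) \<bullet> (v + t *\<^sub>R w) = 1 + t^2 * (w \<bullet> w)"
      using vw vv by (simp add: inner_add_left inner_add_right inner_commute power2_eq_square)
    ultimately show ?thesis using hom[OF zU] wMv by (simp add: algebra_simps)
  qed
  have "w \<bullet> w = 0"
  proof (rule ccontr)
    assume "w \<bullet> w \<noteq> 0"
    hence a: "w \<bullet> w > 0" by (simp add: order_le_neq_trans)
    define c where "c = f v * (w \<bullet> w) - f w"
    define t where "t = (w \<bullet> w) / (\<bar>c\<bar> + 1)"
    have t0: "t > 0" using a by (simp add: t_def)
    have "2 * t * (w \<bullet> w) \<le> t * (t * c)" using key[of t] by (simp add: c_def power2_eq_square)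
    hence "2 * (w \<bullet> w) \<le> t * c" using t0 by simp
    moreover have "t * c \<le> t * \<bar>c\<bar>" using t0 by (simp add: mult_left_mono)
    moreover have "t * \<bar>c\<bar> < w \<bullet> w" unfolding t_def using a
      by (simp add: divide_less_eq)
    ultimately show False using a by linarith
  qed
  hence "w = 0" by simp
  hence "M *v v = f v *\<^sub>R v" by (simp add: w_def)
  thus ?thesis using that vU nv by (simp add: f_def)
qed


lemma spectral_subspace:
  fixes M :: "real^'n^'n"
  assumes sym: "symm M"
  shows "subspace U \<Longrightarrow> (\<forall>x\<in>U. M *v x \<in> U) \<Longrightarrow>
    \<exists>B. B \<subseteq> U \<and> pairwise orthogonal B \<and> (\<forall>b\<in>B. norm b = 1 \<and> M *v b = (b \<bullet> (M *v b)) *\<^sub>R b)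
        \<and> span B = U"
proof (induction "dim U" arbitrary: U rule: less_induct)
  case less
  show ?case
  proof (cases "U = {0}")
    case True
    thus ?thesis by (intro exI[of _ "{}"]) auto
  next
    case False
    obtain v where v: "v \<in> U" "norm v = 1" "M *v v = (v \<bullet> (M *v v)) *\<^sub>R v"
      using eigen_exists[OF sym less.prems False] by blast
    have vv: "v \<bullet> v = 1" using v(2) by (simp add: dot_square_norm)
    define U' where "U' = U \<inter> {y. orthogonal v y}"
    have sU': "subspace U'" unfolding U'_def
      using subspace_inter[OF less.prems(1) subspace_orthogonal_to_vector[of v]] by (simp add: Collect_conj_eq)
    have invU': "\<forall>x\<in>U'. M *v x \<in> U'"
    proof
      fix x assume x: "x \<in> U'"
      have "v \<bullet> (M *v x) = (M *v v) \<bullet> x" using symm_inner[OF sym, of v x] by simp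
      also have "\<dots> = (v \<bullet> (M *v v)) * (v \<bullet> x)" by (subst v(3)) simp
      also have "\<dots> = 0" using x by (simp add: U'_def orthogonal_def)
      finally show "M *v x \<in> U'" using x less.prems(2) by (auto simp: U'_def orthogonal_def)
    qed
    have "v \<notin> U'" using vv by (auto simp: U'_def orthogonal_def)
    hence sub: "U' \<subset> U" using v(1) by (auto simp: U'_def)
    have "dim U' < dim U"
      using dim_psubset[of U' U] sub span_eq_iff[of U'] span_eq_iff[of U] sU' less.prems(1) by metis
    then obtain B' where B': "B' \<subseteq> U'" "pairwise orthogonal B'"
        "\<forall>b\<in>B'. norm b = 1 \<and> M *v b = (b \<bullet> (M *v b)) *\<^sub>R b" "span B' = U'"
      using less.hyps[OF _ sU' invU'] by blast
    show ?thesis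
    proof (intro exI[of _ "insert v B'"] conjI)
      show "insert v B' \<subseteq> U" using B'(1) v(1) by (auto simp: U'_def)
      show "pairwise orthogonal (insert v B')"
        using B'(1,2) by (auto simp: pairwise_insert U'_def orthogonal_commute)
      show "\<forall>b\<in>insert v B'. norm b = 1 \<and> M *v b = (b \<bullet> (M *v b)) *\<^sub>R b" using B'(3) v by auto
      show "span (insert v B') = U"
      proof
        show "span (insert v B') \<subseteq> U"
          using \<open>insert v B' \<subseteq> U\<close> less.prems(1) by (simp add: span_minimal)
        show "U \<subseteq> span (insert v B')"
        proof
          fix x assume x: "x \<in> U"
          have "x - (v \<bullet> x) *\<^sub>R v \<in> U'" using x v(1) less.prems(1) vv
            by (auto simp: U'_def orthogonal_def subspace_diff subspace_scale inner_diff_right)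
          hence "x - (v \<bullet> x) *\<^sub>R v \<in> span (insert v B')" using B'(4) span_mono[of B' "insert v B'"] by auto
          moreover have "(v \<bullet> x) *\<^sub>R v \<in> span (insert v B')" by (simp add: span_base span_mul)
          ultimately have "(x - (v \<bullet> x) *\<^sub>R v) + (v \<bullet> x) *\<^sub>R v \<in> span (insert v B')"
            by (rule span_add)
          thus "x \<in> span (insert v B')" by simp
        qed
      qed
    qed
  qed
qed

lemma spectral:
  fixes M :: "real^'n^'n"
  assumes sym: "symm M"
  shows "\<exists>v :: 'n \<Rightarrow> real^'n.
    (\<forall>i j. v i \<bullet> v j = (if i = j then 1 else 0)) \<and>
    (\<forall>k. M *v v k = (v k \<bullet> (M *v v k)) *\<^sub>R v k) \<and>
    (\<forall>y. y = (\<Sum>k\<in>UNIV. (v k \<bullet> y) *\<^sub>R v k))"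
proof -
  obtain B where B: "pairwise orthogonal B" "\<forall>b\<in>B. norm b = 1 \<and> M *v b = (b \<bullet> (M *v b)) *\<^sub>R b"
      "span B = UNIV"
    using spectral_subspace[OF sym, of UNIV] by auto
  have "0 \<notin> B" using B(2) by auto
  hence ind: "independent B" using B(1) pairwise_orthogonal_independent by blast
  hence fB: "finite B" using independent_imp_finite by blast
  have "card B = dim (UNIV :: (real^'n) set)" using dim_span_eq_card_independent[OF ind] B(3) by simp
  hence cB: "card B = card (UNIV :: 'n set)" by simp
  obtain h where h: "bij_betw h (UNIV :: 'n set) B"
    using finite_same_card_bij[of "UNIV :: 'n set" B] fB cB by auto
  have orth: "h i \<bullet> h j = (if i = j then 1 else 0)" for i j
  proof (cases "i = j")
    case True
    have "h i \<in> B" using h bij_betwE by blast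
    hence "norm (h i) = 1" using B(2) by auto
    thus ?thesis using True by (simp add: dot_square_norm)
  next
    case False
    have "h i \<noteq> h j" using False h by (metis UNIV_I bij_betw_inv_into_left)
    moreover have "h i \<in> B" "h j \<in> B" using h bij_betwE by blast+
    ultimately show ?thesis using B(1) False by (auto simp: pairwise_def orthogonal_def)
  qed
  have eig: "M *v h k = (h k \<bullet> (M *v h k)) *\<^sub>R h k" for k
    using B(2) h bij_betwE by blast
  have exp: "y = (\<Sum>k\<in>UNIV. (h k \<bullet> y) *\<^sub>R h k)" for y
  proof -
    define z where "z = y - (\<Sum>k\<in>UNIV. (h k \<bullet> y) *\<^sub>R h k)"
    have zo: "orthogonal z b" if "b \<in> B" for b
    proof -
      obtain j where j: "b = h j" using h \<open>b \<in> B\<close> by (metis bij_betw_inv_into_right)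
      have "(\<Sum>k\<in>UNIV. (h k \<bullet> y) *\<^sub>R h k) \<bullet> h j = (\<Sum>k\<in>UNIV. (h k \<bullet> y) * (h k \<bullet> h j))"
        by (simp add: inner_sum_left)
      also have "\<dots> = (\<Sum>k\<in>UNIV. if k = j then h j \<bullet> y else 0)"
        by (rule sum.cong) (auto simp: orth)
      also have "\<dots> = h j \<bullet> y" by simp
      finally have "(\<Sum>k\<in>UNIV. (h k \<bullet> y) *\<^sub>R h k) \<bullet> h j = h j \<bullet> y" .
      moreover have "z \<bullet> h j = y \<bullet> h j - (\<Sum>k\<in>UNIV. (h k \<bullet> y) *\<^sub>R h k) \<bullet> h j"
        unfolding z_def by (rule inner_diff_left)
      ultimately have "z \<bullet> h j = 0" by (simp add: inner_commute)
      thus ?thesis unfolding j orthogonal_def .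
    qed
    have "orthogonal z z"
      using orthogonal_to_span[of z B z] zo B(3) by auto
    hence "z = 0" by (simp add: orthogonal_def)
    thus ?thesis by (simp add: z_def)
  qed
  show ?thesis
  proof (intro exI[of _ h] conjI allI)
    fix i j show "h i \<bullet> h j = (if i = j then 1 else 0)" by (rule orth)
  next
    fix k show "M *v h k = (h k \<bullet> (M *v h k)) *\<^sub>R h k" by (rule eig)
  next
    fix y show "y = (\<Sum>k\<in>UNIV. (h k \<bullet> y) *\<^sub>R h k)" by (rule exp)
  qed
qed


lemma sum_pCons2: "finite S \<Longrightarrow> (\<Sum>l\<in>S. [:c l, d l:]) = [:sum c S, sum d S:]"
  by (induction S rule: finite_induct) auto

lemma charpoly_diag:
  fixes M :: "real^'n^'n" and v :: "'n \<Rightarrow> real^'n" and \<mu> :: "'n \<Rightarrow> real"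
  assumes e1: "\<And>i j. (if i = j then 1 else 0) = (\<Sum>k\<in>UNIV. v k $ i * v k $ j)"
      and e2: "\<And>i j. M $ i $ j = (\<Sum>k\<in>UNIV. \<mu> k * v k $ i * v k $ j)"
  shows "charpoly M = (\<Prod>k\<in>UNIV. [:- \<mu> k, 1:])"
proof -
  define P :: "real poly^'n^'n" where "P = (\<chi> i k. [:v k $ i:])"
  define D :: "real poly^'n^'n" where "D = (\<chi> k l. if k = l then [:- \<mu> k, 1:] else 0)"
  define C :: "real poly^'n^'n" where "C = (\<chi> i j. (if i = j then [:0, 1:] else 0) - [:M $ i $ j:])"
  have PD: "(P ** D) $ i $ l = [:v l $ i:] * [:- \<mu> l, 1:]" for i l
  proof -
    have "(P ** D) $ i $ l = (\<Sum>k\<in>UNIV. P $ i $ k * D $ k $ l)" by (simp add: matrix_matrix_mult_def)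
    also have "\<dots> = (\<Sum>k\<in>UNIV. if k = l then [:v l $ i:] * [:- \<mu> l, 1:] else 0)"
      by (rule sum.cong) (auto simp: P_def D_def)
    finally show ?thesis by simp
  qed
  have CP: "C = P ** D ** Finite_Cartesian_Product.transpose P"
  proof -
    have "C $ i $ j = (P ** D ** Finite_Cartesian_Product.transpose P) $ i $ j" for i j
    proof -
      have "(P ** D ** Finite_Cartesian_Product.transpose P) $ i $ j
          = (\<Sum>l\<in>UNIV. [:v l $ i:] * [:- \<mu> l, 1:] * [:v l $ j:])"
      proof -
        have "(P ** D ** Finite_Cartesian_Product.transpose P) $ i $ j
           = (\<Sum>l\<in>UNIV. (P ** D) $ i $ l * (Finite_Cartesian_Product.transpose P) $ l $ j)"
          by (simp add: matrix_matrix_mult_def[of "P ** D"])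
        moreover have "(Finite_Cartesian_Product.transpose P) $ l $ j = [:v l $ j:]" for l
          by (simp add: Finite_Cartesian_Product.transpose_def P_def)
        ultimately show ?thesis by (simp add: PD)
      qed
      also have "\<dots> = (\<Sum>l\<in>UNIV. [:- (\<mu> l * v l $ i * v l $ j), v l $ i * v l $ j:])"
        by (rule sum.cong) (auto simp: algebra_simps)
      also have "\<dots> = [:- (\<Sum>l\<in>UNIV. \<mu> l * v l $ i * v l $ j), (\<Sum>l\<in>UNIV. v l $ i * v l $ j):]"
        by (simp add: sum_pCons2 sum_negf)
      also have "\<dots> = [:- M $ i $ j, (if i = j then 1 else 0):]" using e1[of i j] e2[of i j] by simp
      also have "\<dots> = C $ i $ j" by (simp add: C_def)
      finally show ?thesis by simp
    qed
    thus ?thesis by (simp add: vec_eq_iff)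
  qed
  have PPt: "P ** Finite_Cartesian_Product.transpose P = mat 1"
  proof -
    have "(P ** Finite_Cartesian_Product.transpose P) $ i $ j = mat 1 $ i $ j" for i j
    proof -
      have "(P ** Finite_Cartesian_Product.transpose P) $ i $ j = (\<Sum>k\<in>UNIV. [:v k $ i * v k $ j:])"
        by (simp add: matrix_matrix_mult_def Finite_Cartesian_Product.transpose_def P_def mult_to_poly mult.commute)
      also have "\<dots> = [:(if i = j then 1 else 0):]" by (simp add: sum_to_poly e1[of i j])
      finally show ?thesis by (simp add: mat_def)
    qed
    thus ?thesis by (simp add: vec_eq_iff)
  qed
  have "charpoly M = det C" by (simp add: charpoly_def C_def)
  also have "\<dots> = det P * det D * det (Finite_Cartesian_Product.transpose P)" by (simp add: CP det_mul)
  also have "\<dots> = det D * det (P ** Finite_Cartesian_Product.transpose P)" by (simp add: det_mul)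
  also have "\<dots> = det D" by (simp add: PPt)
  also have "\<dots> = (\<Prod>k\<in>UNIV. [:- \<mu> k, 1:])" by (subst det_diagonal) (auto simp: D_def)
  finally show ?thesis .
qed

lemma order_prod_lin:
  fixes \<mu> :: "'n \<Rightarrow> real"
  shows "finite K \<Longrightarrow> order a (\<Prod>k\<in>K. [:- \<mu> k, 1:]) = card {k\<in>K. \<mu> k = a}"
proof (induction K rule: finite_induct)
  case empty
  then show ?case by (simp add: order_0I)
next
  case (insert x F)
  have ne: "(\<Prod>k\<in>insert x F. [:- \<mu> k, 1:]) \<noteq> 0"
    apply (subst prod_zero_iff) using insert.hyps by auto
  have o1: "order a [:- \<mu> x, 1:] = (if \<mu> x = a then 1 else 0)"
  proof (cases "\<mu> x = a")
    case True thus ?thesis using order_power_n_n[of a 1] by simp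
  next
    case False thus ?thesis by (simp add: order_0I)
  qed
  have "order a (\<Prod>k\<in>insert x F. [:- \<mu> k, 1:]) = order a [:- \<mu> x, 1:] + order a (\<Prod>k\<in>F. [:- \<mu> k, 1:])"
    using ne insert.hyps prod.insert[of F x "\<lambda>k. [:- \<mu> k, 1:]"] order_mult[of "[:- \<mu> x, 1:]" "\<Prod>k\<in>F. [:- \<mu> k, 1:]" a]
    by (simp del: mult_pCons_left)
  also have "\<dots> = card {k\<in>insert x F. \<mu> k = a}"
  proof (cases "\<mu> x = a")
    case True
    hence "{k\<in>insert x F. \<mu> k = a} = insert x {k\<in>F. \<mu> k = a}" by auto
    thus ?thesis using o1 insert True by simp
  next
    case False
    hence "{k\<in>insert x F. \<mu> k = a} = {k\<in>F. \<mu> k = a}" by auto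
    thus ?thesis using o1 insert False by simp
  qed
  finally show ?case .
qed


definition one_vec :: "real^'n" where "one_vec = (\<chi> i. 1)"

lemma one_vec_nz: "one_vec \<noteq> (0::real^'n)"
  by (simp add: one_vec_def vec_eq_iff)

lemma lambda2_spectral:
  fixes M :: "real^'n^'n"
  assumes sym: "symm M" and N2: "CARD('n) \<ge> 2"
  shows "\<exists>(v :: 'n \<Rightarrow> real^'n) (\<mu> :: 'n \<Rightarrow> real).
    (\<forall>i j. v i \<bullet> v j = (if i = j then 1 else 0)) \<and>
    (\<forall>k. M *v v k = \<mu> k *\<^sub>R v k) \<and>
    (\<forall>y. y = (\<Sum>k\<in>UNIV. (v k \<bullet> y) *\<^sub>R v k)) \<and>
    (\<forall>y. y \<bullet> (M *v y) = (\<Sum>k\<in>UNIV. \<mu> k * (v k \<bullet> y)^2)) \<and>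
    (\<forall>y. y \<bullet> y = (\<Sum>k\<in>UNIV. (v k \<bullet> y)^2)) \<and>
    lambda2 M \<in> range \<mu> \<and>
    card {k. lambda2 M < \<mu> k} \<le> 1 \<and>
    2 \<le> card {k. lambda2 M \<le> \<mu> k}"
proof -
  from spectral[OF sym] obtain v :: "'n \<Rightarrow> real^'n" where v:
    "(\<forall>i j. v i \<bullet> v j = (if i = j then 1 else 0)) \<and>
    (\<forall>k. M *v v k = (v k \<bullet> (M *v v k)) *\<^sub>R v k) \<and>
    (\<forall>y. y = (\<Sum>k\<in>UNIV. (v k \<bullet> y) *\<^sub>R v k))" ..
  note vv = conjunct1[OF v] conjunct1[OF conjunct2[OF v]] conjunct2[OF conjunct2[OF v]]
  have orth: "v i \<bullet> v j = (if i = j then 1 else 0)" for i j using vv(1) by blast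
  have eig0: "M *v v k = (v k \<bullet> (M *v v k)) *\<^sub>R v k" for k using vv(2) by (rule spec)
  have ex: "y = (\<Sum>k\<in>UNIV. (v k \<bullet> y) *\<^sub>R v k)" for y using vv(3) by (rule spec)
  define \<mu> where "\<mu> k = v k \<bullet> (M *v v k)" for k
  have eig: "M *v v k = \<mu> k *\<^sub>R v k" for k unfolding \<mu>_def by (rule eig0)
  have My: "M *v y = (\<Sum>k\<in>UNIV. ((v k \<bullet> y) * \<mu> k) *\<^sub>R v k)" for y
  proof -
    have "M *v y = M *v (\<Sum>k\<in>UNIV. (v k \<bullet> y) *\<^sub>R v k)" by (rule arg_cong[OF ex])
    also have "\<dots> = (\<Sum>k\<in>UNIV. ((v k \<bullet> y) * \<mu> k) *\<^sub>R v k)"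
      by (simp add: vec.sum matrix_vector_mult_scaleR eig)
    finally show ?thesis .
  qed
  have qf: "y \<bullet> (M *v y) = (\<Sum>k\<in>UNIV. \<mu> k * (v k \<bullet> y)^2)" for y
    by (subst My) (simp add: inner_sum_right power2_eq_square inner_commute algebra_simps)
  have nn: "y \<bullet> y = (\<Sum>k\<in>UNIV. (v k \<bullet> y)^2)" for y
    by (subst (2) ex[of y]) (simp add: inner_sum_right power2_eq_square inner_commute)
  have e1: "(if i = j then 1 else 0) = (\<Sum>k\<in>UNIV. v k $ i * v k $ j)" for i j
  proof -
    have "axis j (1::real) $ i = (\<Sum>k\<in>UNIV. (v k \<bullet> axis j 1) *\<^sub>R v k) $ i" by (rule arg_cong[where f="\<lambda>z. z $ i", OF ex])
    hence "axis j (1::real) $ i = (\<Sum>k\<in>UNIV. v k $ i * v k $ j)"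
      by (simp add: sum_component inner_axis mult.commute)
    thus ?thesis by (simp add: axis_def)
  qed
  have e2: "M $ i $ j = (\<Sum>k\<in>UNIV. \<mu> k * v k $ i * v k $ j)" for i j
  proof -
    have "M $ i $ j = (M *v axis j 1) $ i"
      by (simp add: matrix_vector_mult_def axis_def if_distrib cong: if_cong)
    also have "\<dots> = (\<Sum>k\<in>UNIV. ((v k \<bullet> axis j 1) * \<mu> k) *\<^sub>R v k) $ i" by (simp add: My)
    also have "\<dots> = (\<Sum>k\<in>UNIV. \<mu> k * v k $ i * v k $ j)"
      by (simp add: sum_component inner_axis mult.commute mult.left_commute)
    finally show ?thesis .
  qed
  have cp: "charpoly M = (\<Prod>k\<in>UNIV. [:- \<mu> k, 1:])" by (rule charpoly_diag[OF e1 e2])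
  have eigs: "eigenvalues M = range \<mu>"
  proof -
    have "poly (charpoly M) x = (\<Prod>k\<in>UNIV. x - \<mu> k)" for x by (simp add: cp poly_prod)
    thus ?thesis by (auto simp: eigenvalues_def)
  qed
  have cnt: "(\<Sum>\<nu>\<in>{\<nu> \<in> eigenvalues M. m \<le> \<nu>}. order \<nu> (charpoly M)) = card {k. m \<le> \<mu> k}" for m
  proof -
    have "(\<Sum>\<nu>\<in>{\<nu> \<in> eigenvalues M. m \<le> \<nu>}. order \<nu> (charpoly M))
        = (\<Sum>\<nu>\<in>{\<nu> \<in> range \<mu>. m \<le> \<nu>}. card {k. \<mu> k = \<nu>})"
      by (simp add: eigs cp order_prod_lin)
    also have "\<dots> = card (\<Union>\<nu>\<in>{\<nu> \<in> range \<mu>. m \<le> \<nu>}. {k. \<mu> k = \<nu>})"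
      by (rule card_UN_disjoint[symmetric]) auto
    also have "(\<Union>\<nu>\<in>{\<nu> \<in> range \<mu>. m \<le> \<nu>}. {k. \<mu> k = \<nu>}) = {k. m \<le> \<mu> k}" by auto
    finally show ?thesis .
  qed
  define S where "S = {m \<in> range \<mu>. 2 \<le> card {k. m \<le> \<mu> k}}"
  have l2: "lambda2 M = Max S"
    unfolding lambda2_def S_def using cnt eigs by simp
  have fS: "finite S" unfolding S_def by simp
  have "Min (range \<mu>) \<in> S"
  proof -
    have "{k. Min (range \<mu>) \<le> \<mu> k} = UNIV" by auto
    thus ?thesis using N2 by (simp add: S_def)
  qed
  hence Sne: "S \<noteq> {}" by auto
  have L_in: "lambda2 M \<in> range \<mu>" using Max_in[OF fS Sne] l2 by (auto simp: S_def)
  have L_2: "2 \<le> card {k. lambda2 M \<le> \<mu> k}" using Max_in[OF fS Sne] l2 by (auto simp: S_def)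
  have L_max: "m \<le> lambda2 M" if "m \<in> S" for m using Max_ge[OF fS that] l2 by simp
  have "card {k. lambda2 M < \<mu> k} \<le> 1"
  proof (rule ccontr)
    assume "\<not> ?thesis"
    hence "card {k. lambda2 M < \<mu> k} \<ge> 2" by simp
    hence "\<not> card {k. lambda2 M < \<mu> k} \<le> Suc 0" by simp
    hence "\<not> (\<forall>a\<in>{k. lambda2 M < \<mu> k}. \<forall>b\<in>{k. lambda2 M < \<mu> k}. a = b)"
      using card_le_Suc0_iff_eq[of "{k. lambda2 M < \<mu> k}"] by simp
    then obtain k1 k2 where k: "k1 \<noteq> k2" "lambda2 M < \<mu> k1" "lambda2 M < \<mu> k2" by blast
    define m where "m = min (\<mu> k1) (\<mu> k2)"
    have "{k1, k2} \<subseteq> {k. m \<le> \<mu> k}" by (auto simp: m_def)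
    hence "2 \<le> card {k. m \<le> \<mu> k}" using k(1) card_mono[of "{k. m \<le> \<mu> k}" "{k1,k2}"] by simp
    moreover have "m \<in> range \<mu>" by (simp add: m_def min_def)
    ultimately have "m \<in> S" by (simp add: S_def)
    hence "m \<le> lambda2 M" by (rule L_max)
    thus False using k by (simp add: m_def)
  qed
  show ?thesis
    apply (rule exI[of _ v], rule exI[of _ \<mu>])
    apply (intro conjI allI)
    apply (rule orth) apply (rule eig) apply (rule ex) apply (rule qf) apply (rule nn)
    apply (rule L_in) apply (rule \<open>card {k. lambda2 M < \<mu> k} \<le> 1\<close>) by (rule L_2)
qed


lemma sum_mat_vec: "finite S \<Longrightarrow> (\<Sum>a\<in>S. A a) *v y = (\<Sum>a\<in>S. A a *v y)"
  for A :: "'a \<Rightarrow> real^'n^'m"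
  by (induction S rule: finite_induct) (auto simp: matrix_vector_mult_add_rdistrib)

lemma scaleR_mat_vec: "(c *\<^sub>R A) *v y = c *\<^sub>R (A *v y)" for A :: "real^'n^'m"
  by (simp add: scaleR_matrix_vector_assoc)

lemma axis_inner: "axis i (1::real) \<bullet> y = y $ i"
  by (simp add: inner_commute inner_axis)

lemma W_edge_vec:
  assumes "s \<noteq> t"
  shows "W_edge s t *v y = y - ((y $ s - y $ t) / 2) *\<^sub>R (axis s 1 - axis t 1)"
proof -
  have "outer (axis s 1 - axis t 1) (axis s 1 - axis t 1) *v y = (y $ s - y $ t) *\<^sub>R (axis s 1 - axis t 1)"
  proof -
    have "(outer (axis s 1 - axis t 1) (axis s 1 - axis t 1) *v y) $ i
        = ((y $ s - y $ t) *\<^sub>R (axis s 1 - axis t 1)) $ i" for i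
    proof -
      have "(outer (axis s 1 - axis t 1) (axis s 1 - axis t 1) *v y) $ i
          = (axis s 1 - axis t 1) $ i * (\<Sum>j\<in>UNIV. (axis s 1 - axis t 1) $ j * y $ j)"
        by (simp add: outer_def matrix_vector_mult_def sum_distrib_left mult.assoc)
      also have "(\<Sum>j\<in>UNIV. (axis s (1::real) - axis t 1) $ j * y $ j) = y $ s - y $ t"
      proof -
        have "(\<Sum>j\<in>UNIV. (axis s (1::real) - axis t 1) $ j * y $ j) = (axis s 1 - axis t 1) \<bullet> y"
          by (simp add: inner_vec_def)
        also have "\<dots> = y $ s - y $ t" by (simp add: inner_diff_left axis_inner)
        finally show ?thesis .
      qed
      finally show ?thesis by (simp add: mult.commute)
    qed
    thus ?thesis by (simp add: vec_eq_iff)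
  qed
  thus ?thesis
    by (simp add: W_edge_def matrix_vector_mult_diff_rdistrib scaleR_mat_vec)
qed

lemma W_edge_qf:
  assumes "s \<noteq> t"
  shows "y \<bullet> (W_edge s t *v y) = y \<bullet> y - (y $ s - y $ t)^2 / 2"
proof -
  have "y \<bullet> (W_edge s t *v y) = y \<bullet> y - ((y $ s - y $ t) / 2) * (y $ s - y $ t)"
    using assms by (simp add: W_edge_vec inner_diff_right inner_axis)
  thus ?thesis by (simp add: power2_eq_square)
qed

lemma W_edge_one:
  assumes "s \<noteq> t"
  shows "W_edge s t *v one_vec = one_vec"
  using assms by (simp add: W_edge_vec one_vec_def)

lemma W_bar_vec:
  "W_bar E *v y = (1 / real CARD('n)) *\<^sub>R
     (\<Sum>s\<in>UNIV. (1 / real (card (nbrs E s))) *\<^sub>R (\<Sum>t\<in>nbrs E s. W_edge s t *v y))"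
  for y :: "real^'n::finite"
  unfolding W_bar_def
  by (simp add: scaleR_mat_vec sum_mat_vec nbrs_def)

definition irrefl_g :: "('n \<Rightarrow> 'n \<Rightarrow> bool) \<Rightarrow> bool" where
  "irrefl_g E \<longleftrightarrow> (\<forall>s. \<not> E s s)"

lemma W_bar_qf:
  fixes E :: "'n::finite \<Rightarrow> 'n \<Rightarrow> bool"
  assumes irr: "irrefl_g E"
  shows "y \<bullet> (W_bar E *v y) = (1 / real CARD('n)) *
     (\<Sum>s\<in>UNIV. (1 / real (card (nbrs E s))) * (\<Sum>t\<in>nbrs E s. y \<bullet> y - (y $ s - y $ t)^2 / 2))"
proof -
  have "y \<bullet> (W_bar E *v y) = (1 / real CARD('n)) *
     (\<Sum>s\<in>UNIV. (1 / real (card (nbrs E s))) * (\<Sum>t\<in>nbrs E s. y \<bullet> (W_edge s t *v y)))"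
    by (simp add: W_bar_vec inner_sum_right)
  also have "\<dots> = (1 / real CARD('n)) *
     (\<Sum>s\<in>UNIV. (1 / real (card (nbrs E s))) * (\<Sum>t\<in>nbrs E s. y \<bullet> y - (y $ s - y $ t)^2 / 2))"
  proof -
    have "t \<in> nbrs E s \<Longrightarrow> s \<noteq> t" for s t using irr by (auto simp: irrefl_g_def nbrs_def)
    thus ?thesis by (simp add: W_edge_qf)
  qed
  finally show ?thesis .
qed

lemma W_bar_one:
  fixes E :: "'n::finite \<Rightarrow> 'n \<Rightarrow> bool"
  assumes irr: "irrefl_g E" and ne: "\<forall>s. nbrs E s \<noteq> {}"
  shows "W_bar E *v one_vec = one_vec"
proof -
  have "t \<in> nbrs E s \<Longrightarrow> s \<noteq> t" for s t using irr by (auto simp: irrefl_g_def nbrs_def)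
  hence "W_bar E *v one_vec = (1 / real CARD('n)) *\<^sub>R
     (\<Sum>s\<in>UNIV. (1 / real (card (nbrs E s))) *\<^sub>R (\<Sum>t\<in>nbrs E s. one_vec))"
    by (simp add: W_bar_vec W_edge_one del: sum_constant)
  also have "\<dots> = one_vec"
  proof -
    have "card (nbrs E s) > 0" for s using ne by (simp add: card_gt_0_iff nbrs_def)
    hence "(\<Sum>s\<in>UNIV. (1 / real (card (nbrs E s))) *\<^sub>R (\<Sum>t\<in>nbrs E s. one_vec))
        = (\<Sum>s\<in>(UNIV::'n set). one_vec)"
      apply (intro sum.cong refl) using ne by (auto simp: sum_constant_scaleR nbrs_def simp del: sum_constant)
    hence h1: "(\<Sum>s\<in>UNIV. (1 / real (card (nbrs E s))) *\<^sub>R (\<Sum>t\<in>nbrs E s. one_vec))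
        = real CARD('n) *\<^sub>R one_vec" by (simp only: sum_constant_scaleR)
    have "(1 / real CARD('n)) *\<^sub>R (\<Sum>s\<in>UNIV. (1 / real (card (nbrs E s))) *\<^sub>R (\<Sum>t\<in>nbrs E s. one_vec))
        = (1 / real CARD('n)) *\<^sub>R (real CARD('n) *\<^sub>R one_vec)"
      by (simp only: h1)
    thus ?thesis by simp
  qed
  finally show ?thesis .
qed

lemma symm_W_bar: "symm (W_bar E)"
proof -
  have we: "W_edge s t $ i $ j = W_edge s t $ j $ i" for s t i j
    by (simp add: W_edge_def outer_def mat_def mult.commute)
  have "W_bar E $ i $ j = W_bar E $ j $ i" for i j
    unfolding W_bar_def
    apply (simp add: sum_component)
    apply (rule sum.cong, rule refl)
    apply (rule arg_cong[where f="\<lambda>x. x / _"])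
    apply (rule sum.cong, rule refl)
    by (rule we)
  thus ?thesis by (simp add: symm_def)
qed

lemma qf_nonneg:
  fixes y :: "real^'n::finite"
  assumes "s \<noteq> t"
  shows "y \<bullet> y - (y $ s - y $ t)^2 / 2 \<ge> 0"
proof -
  have "y \<bullet> y = (\<Sum>i\<in>UNIV. (y $ i)^2)" by (simp add: inner_vec_def power2_eq_square)
  also have "\<dots> \<ge> (\<Sum>i\<in>{s,t}. (y $ i)^2)" by (rule sum_mono2) auto
  finally have "y \<bullet> y \<ge> (y $ s)^2 + (y $ t)^2" using assms by simp
  moreover have "(y $ s)^2 + (y $ t)^2 - (y $ s - y $ t)^2 / 2 = (y $ s + y $ t)^2 / 2"
    by (simp add: power2_eq_square field_simps)
  moreover have "(y $ s + y $ t)^2 / 2 \<ge> 0" by simp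
  ultimately show ?thesis by linarith
qed


lemma conn_irrefl: "connected_graph E \<Longrightarrow> irrefl_g E"
  by (simp add: connected_graph_def irrefl_g_def)

lemma conn_nbrs_ne:
  fixes E :: "'n::finite \<Rightarrow> 'n \<Rightarrow> bool"
  assumes c: "connected_graph E" and N2: "CARD('n) \<ge> 2"
  shows "nbrs E s \<noteq> {}"
proof -
  have "\<not> card (UNIV :: 'n set) \<le> Suc 0" using N2 by simp
  hence "\<not> (\<forall>a\<in>(UNIV::'n set). \<forall>b\<in>UNIV. a = b)" using card_le_Suc0_iff_eq[of "UNIV :: 'n set"] by simp
  then obtain t :: 'n where t: "t \<noteq> s" by metis
  have "E\<^sup>*\<^sup>* s t" using c by (simp add: connected_graph_def)
  then obtain y where "E s y" using t by (cases rule: converse_rtranclpE) auto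
  thus ?thesis by (auto simp: nbrs_def)
qed

lemma conn_const:
  fixes E :: "'n::finite \<Rightarrow> 'n \<Rightarrow> bool" and x :: "real^'n"
  assumes c: "connected_graph E" and eq: "\<And>s t. E s t \<Longrightarrow> x $ s = x $ t"
  shows "x = x $ s0 *\<^sub>R one_vec"
proof -
  have "E\<^sup>*\<^sup>* s0 t \<Longrightarrow> x $ s0 = x $ t" for t
    by (induction rule: rtranclp_induct) (auto dest: eq)
  hence h: "x $ s0 = x $ t" for t using c by (simp add: connected_graph_def)
  show ?thesis by (simp add: vec_eq_iff one_vec_def) (metis h)
qed

lemma W_bar_R:
  fixes E :: "'n::finite \<Rightarrow> 'n \<Rightarrow> bool"
  assumes irr: "irrefl_g E" and ne: "\<And>s. nbrs E s \<noteq> {}"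
  shows "y \<bullet> (W_bar E *v y) = y \<bullet> y - R_RG E y"
proof -
  have d: "real (card (nbrs E s)) > 0" for s using ne[of s] by (simp add: card_gt_0_iff nbrs_def)
  have "y \<bullet> (W_bar E *v y) = (1 / real CARD('n)) *
     (\<Sum>s\<in>UNIV. (1 / real (card (nbrs E s))) * (\<Sum>t\<in>nbrs E s. y \<bullet> y - (y $ s - y $ t)^2 / 2))"
    by (rule W_bar_qf[OF irr])
  also have "\<dots> = (1 / real CARD('n)) *
     (\<Sum>s\<in>UNIV. y \<bullet> y - (1 / real (card (nbrs E s))) * (\<Sum>t\<in>nbrs E s. (y $ s - y $ t)^2) / 2)"
  proof -
    have "(1 / real (card (nbrs E s))) * (\<Sum>t\<in>nbrs E s. y \<bullet> y - (y $ s - y $ t)^2 / 2)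
       = y \<bullet> y - (1 / real (card (nbrs E s))) * (\<Sum>t\<in>nbrs E s. (y $ s - y $ t)^2) / 2" for s
    proof -
      have eq: "(\<Sum>t\<in>nbrs E s. y \<bullet> y - (y $ s - y $ t)^2 / 2)
          = real (card (nbrs E s)) * (y \<bullet> y) - (\<Sum>t\<in>nbrs E s. (y $ s - y $ t)^2) / 2"
        by (simp add: sum_subtractf sum_divide_distrib[symmetric])
      have "real (card (nbrs E s)) \<noteq> 0" using d[of s] by linarith
      thus ?thesis unfolding eq by (simp add: field_simps)
    qed
    thus ?thesis by simp
  qed
  also have "\<dots> = y \<bullet> y - R_RG E y"
  proof -
    have "(\<Sum>s\<in>UNIV. y \<bullet> y - (1 / real (card (nbrs E s))) * (\<Sum>t\<in>nbrs E s. (y $ s - y $ t)^2) / 2)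
       = real CARD('n) * (y \<bullet> y) - (\<Sum>s\<in>UNIV. (1 / real (card (nbrs E s))) * (\<Sum>t\<in>nbrs E s. (y $ s - y $ t)^2)) / 2"
      by (subst sum_subtractf, subst sum_divide_distrib[symmetric], simp)
    moreover have "real CARD('n) \<noteq> 0" by simp
    ultimately show ?thesis unfolding R_RG_def by (simp add: field_simps)
  qed
  finally show ?thesis .
qed

lemma R_RG_nonneg: "R_RG E y \<ge> 0"
  unfolding R_RG_def
  by (rule mult_nonneg_nonneg, simp, rule sum_nonneg, rule mult_nonneg_nonneg, simp, rule sum_nonneg, simp)

lemma R_RG_zero:
  fixes E :: "'n::finite \<Rightarrow> 'n \<Rightarrow> bool"
  assumes ne: "\<And>s. nbrs E s \<noteq> {}" and z: "R_RG E y = 0" and e: "E s t"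
  shows "y $ s = y $ t"
proof -
  have d: "real (card (nbrs E s)) > 0" for s using ne[of s] by (simp add: card_gt_0_iff nbrs_def)
  have "(\<Sum>s\<in>UNIV. 1 / real (card (nbrs E s)) * (\<Sum>t\<in>nbrs E s. (y $ s - y $ t)\<^sup>2)) = 0"
    using z by (simp add: R_RG_def)
  hence "\<forall>s\<in>UNIV. 1 / real (card (nbrs E s)) * (\<Sum>t\<in>nbrs E s. (y $ s - y $ t)\<^sup>2) = 0"
    by (subst (asm) sum_nonneg_eq_0_iff) (auto intro!: mult_nonneg_nonneg sum_nonneg divide_nonneg_nonneg)
  hence "(\<Sum>t\<in>nbrs E s. (y $ s - y $ t)\<^sup>2) = 0" using d[of s] ne[of s] by auto
  hence "\<forall>t\<in>nbrs E s. (y $ s - y $ t)\<^sup>2 = 0" by (subst (asm) sum_nonneg_eq_0_iff) auto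
  thus ?thesis using e by (simp add: nbrs_def)
qed

lemma lambda2_W_bar:
  fixes E :: "'n::finite \<Rightarrow> 'n \<Rightarrow> bool"
  assumes c: "connected_graph E" and N2: "CARD('n) \<ge> 2"
  shows "0 \<le> lambda2 (W_bar E)" "lambda2 (W_bar E) < 1"
    "\<And>y. one_vec \<bullet> y = 0 \<Longrightarrow> y \<bullet> (W_bar E *v y) \<le> lambda2 (W_bar E) * (y \<bullet> y)"
proof -
  let ?W = "W_bar E" and ?L = "lambda2 (W_bar E)"
  have irr: "irrefl_g E" using c by (rule conn_irrefl)
  have ne: "\<And>s. nbrs E s \<noteq> {}" using conn_nbrs_ne[OF c N2] .
  obtain v :: "'n \<Rightarrow> real^'n" and \<mu> where
    orth: "\<And>i j. v i \<bullet> v j = (if i = j then 1 else 0)" and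
    eig: "\<And>k. ?W *v v k = \<mu> k *\<^sub>R v k" and
    ex: "\<And>y. y = (\<Sum>k\<in>UNIV. (v k \<bullet> y) *\<^sub>R v k)" and
    qf: "\<And>y. y \<bullet> (?W *v y) = (\<Sum>k\<in>UNIV. \<mu> k * (v k \<bullet> y)^2)" and
    nn: "\<And>y. y \<bullet> y = (\<Sum>k\<in>UNIV. (v k \<bullet> y)^2)" and
    Lin: "?L \<in> range \<mu>" and L1: "card {k. ?L < \<mu> k} \<le> 1" and L2: "2 \<le> card {k. ?L \<le> \<mu> k}"
  proof -
    from lambda2_spectral[OF symm_W_bar N2, of E] obtain v :: "'n \<Rightarrow> real^'n" where
      "\<exists>\<mu>. (\<forall>i j. v i \<bullet> v j = (if i = j then 1 else 0)) \<and>
    (\<forall>k. ?W *v v k = \<mu> k *\<^sub>R v k) \<and>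
    (\<forall>y. y = (\<Sum>k\<in>UNIV. (v k \<bullet> y) *\<^sub>R v k)) \<and>
    (\<forall>y. y \<bullet> (?W *v y) = (\<Sum>k\<in>UNIV. \<mu> k * (v k \<bullet> y)^2)) \<and>
    (\<forall>y. y \<bullet> y = (\<Sum>k\<in>UNIV. (v k \<bullet> y)^2)) \<and>
    ?L \<in> range \<mu> \<and> card {k. ?L < \<mu> k} \<le> 1 \<and> 2 \<le> card {k. ?L \<le> \<mu> k}" ..
    then obtain \<mu> where H: "(\<forall>i j. v i \<bullet> v j = (if i = j then 1 else 0)) \<and>
    (\<forall>k. ?W *v v k = \<mu> k *\<^sub>R v k) \<and>
    (\<forall>y. y = (\<Sum>k\<in>UNIV. (v k \<bullet> y) *\<^sub>R v k)) \<and>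
    (\<forall>y. y \<bullet> (?W *v y) = (\<Sum>k\<in>UNIV. \<mu> k * (v k \<bullet> y)^2)) \<and>
    (\<forall>y. y \<bullet> y = (\<Sum>k\<in>UNIV. (v k \<bullet> y)^2)) \<and>
    ?L \<in> range \<mu> \<and> card {k. ?L < \<mu> k} \<le> 1 \<and> 2 \<le> card {k. ?L \<le> \<mu> k}" ..
    note HH = conjunct1[OF H] conjunct1[OF conjunct2[OF H]] conjunct1[OF conjunct2[OF conjunct2[OF H]]]
      conjunct1[OF conjunct2[OF conjunct2[OF conjunct2[OF H]]]]
      conjunct1[OF conjunct2[OF conjunct2[OF conjunct2[OF conjunct2[OF H]]]]]
      conjunct2[OF conjunct2[OF conjunct2[OF conjunct2[OF conjunct2[OF H]]]]]
    show thesis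
    proof (rule that[of v \<mu>])
      show "\<And>i j. v i \<bullet> v j = (if i = j then 1 else 0)" using HH(1) by blast
      show "\<And>k. ?W *v v k = \<mu> k *\<^sub>R v k" using HH(2) by (rule spec)
      show "\<And>y. y = (\<Sum>k\<in>UNIV. (v k \<bullet> y) *\<^sub>R v k)" using HH(3) by (rule spec)
      show "\<And>y. y \<bullet> (?W *v y) = (\<Sum>k\<in>UNIV. \<mu> k * (v k \<bullet> y)^2)" using HH(4) by (rule spec)
      show "\<And>y. y \<bullet> y = (\<Sum>k\<in>UNIV. (v k \<bullet> y)^2)" using HH(5) by (rule spec)
      show "?L \<in> range \<mu>" using HH(6) by (rule conjunct1)
      show "card {k. ?L < \<mu> k} \<le> 1" using HH(6) by blast
      show "2 \<le> card {k. ?L \<le> \<mu> k}" using HH(6) by blast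
    qed
  qed
  have muq: "\<mu> k = v k \<bullet> (?W *v v k)" for k using orth[of k k] by (simp add: eig)
  have mu0: "\<mu> k \<ge> 0" for k
  proof -
    have "v k \<bullet> (?W *v v k) \<ge> 0"
      unfolding W_bar_qf[OF irr]
      by (intro mult_nonneg_nonneg sum_nonneg qf_nonneg) (use irr in \<open>auto simp: nbrs_def irrefl_g_def\<close>)
    thus ?thesis by (simp add: muq)
  qed
  have mu1: "\<mu> k \<le> 1" for k
    using muq[of k] W_bar_R[OF irr ne, of "v k"] orth[of k k] R_RG_nonneg[of E "v k"] by simp
  show "0 \<le> ?L" using Lin mu0 by auto
  have Lle1: "?L \<le> 1" using Lin mu1 by auto
  show "?L < 1"
  proof (rule ccontr)
    assume "\<not> ?L < 1"
    hence L: "?L = 1" using Lle1 by simp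
    have "\<not> card {k. ?L \<le> \<mu> k} \<le> Suc 0" using L2 by simp
    hence "\<not> (\<forall>a\<in>{k. ?L \<le> \<mu> k}. \<forall>b\<in>{k. ?L \<le> \<mu> k}. a = b)"
      using card_le_Suc0_iff_eq[of "{k. ?L \<le> \<mu> k}"] by simp
    then obtain k1 k2 where k0: "k1 \<noteq> k2" "?L \<le> \<mu> k1" "?L \<le> \<mu> k2" by blast
    hence k: "k1 \<noteq> k2" "1 \<le> \<mu> k1" "1 \<le> \<mu> k2" unfolding L by auto
    have const: "\<exists>c. v k = c *\<^sub>R one_vec" if "\<mu> k = 1" for k
    proof -
      have "R_RG E (v k) = 0"
        using W_bar_R[OF irr ne, of "v k"] muq[of k] that orth[of k k] by simp
      hence "\<And>s t. E s t \<Longrightarrow> v k $ s = v k $ t" using R_RG_zero[OF ne] by blast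
      thus ?thesis using conn_const[OF c] by blast
    qed
    have "\<mu> k1 = 1" using k(2) mu1[of k1] by linarith
    then obtain c1 where c1: "v k1 = c1 *\<^sub>R one_vec" using const[of k1] by blast
    have "\<mu> k2 = 1" using k(3) mu1[of k2] by linarith
    then obtain c2 where c2: "v k2 = c2 *\<^sub>R one_vec" using const[of k2] by blast
    have oo: "(one_vec::real^'n) \<bullet> one_vec = real CARD('n)" by (simp add: one_vec_def inner_vec_def)
    have "c1 * c2 * real CARD('n) = 0" using orth[of k1 k2] k(1) by (simp add: c1 c2 oo algebra_simps)
    hence "c1 = 0 \<or> c2 = 0" by auto
    moreover have "c1 * c1 * real CARD('n) = 1" using orth[of k1 k1] by (simp add: c1 oo)
    moreover have "c2 * c2 * real CARD('n) = 1" using orth[of k2 k2] by (simp add: c2 oo)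
    ultimately show False by auto
  qed
  fix y :: "real^'n" assume y: "one_vec \<bullet> y = 0"
  have zero: "v k \<bullet> y = 0" if kL: "?L < \<mu> k" for k
  proof -
    have others: "\<mu> j \<le> ?L" if "j \<noteq> k" for j
    proof (rule ccontr)
      assume "\<not> \<mu> j \<le> ?L"
      hence "{j, k} \<subseteq> {k. ?L < \<mu> k}" using kL by auto
      hence "card {j, k} \<le> card {k. ?L < \<mu> k}" by (intro card_mono) auto
      thus False using L1 \<open>j \<noteq> k\<close> by simp
    qed
    define d where "d j = v j \<bullet> one_vec" for j
    have dj: "(\<mu> j - 1) * d j = 0" for j
    proof -
      have "v j \<bullet> (?W *v one_vec) = (?W *v v j) \<bullet> one_vec"
        using symm_inner[OF symm_W_bar[of E], of "v j" one_vec] by simp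
      hence "d j = \<mu> j * d j" by (simp add: W_bar_one[OF irr] ne eig d_def)
      thus ?thesis by (simp add: algebra_simps)
    qed
    have onez: "one_vec = (\<Sum>j\<in>UNIV. d j *\<^sub>R v j)" unfolding d_def by (rule ex)
    have mk: "\<mu> k = 1"
    proof (rule ccontr)
      assume "\<mu> k \<noteq> 1"
      hence "\<mu> k < 1" using mu1[of k] by simp
      hence "\<mu> j \<noteq> 1" for j using others[of j] kL by (cases "j = k") auto
      hence "d j = 0" for j using dj[of j] by simp
      hence "one_vec = (0::real^'n)" using onez by simp
      thus False using one_vec_nz by blast
    qed
    have dz: "d j = 0" if "j \<noteq> k" for j using dj[of j] others[OF that] kL mk by auto
    have "(\<Sum>j\<in>UNIV. d j *\<^sub>R v j) = (\<Sum>j\<in>UNIV. if j = k then d k *\<^sub>R v k else 0)"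
      by (rule sum.cong[OF refl]) (simp add: dz)
    hence "one_vec = (\<Sum>j\<in>UNIV. if j = k then d k *\<^sub>R v k else 0)"
      using onez by simp
    hence o: "one_vec = d k *\<^sub>R v k" by simp
    hence "d k \<noteq> 0" using one_vec_nz by auto
    moreover have "d k * (v k \<bullet> y) = 0"
    proof -
      have "one_vec \<bullet> y = (d k *\<^sub>R v k) \<bullet> y" using o by (rule arg_cong)
      thus ?thesis using y by simp
    qed
    ultimately show ?thesis by simp
  qed
  have "y \<bullet> (?W *v y) = (\<Sum>k\<in>UNIV. \<mu> k * (v k \<bullet> y)^2)" by (rule qf)
  also have "\<dots> \<le> (\<Sum>k\<in>UNIV. ?L * (v k \<bullet> y)^2)"
  proof (rule sum_mono)
    fix k show "\<mu> k * (v k \<bullet> y)^2 \<le> ?L * (v k \<bullet> y)^2"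
    proof (cases "?L < \<mu> k")
      case True thus ?thesis using zero[of k] by simp
    next
      case False thus ?thesis by (intro mult_right_mono) auto
    qed
  qed
  also have "\<dots> = ?L * (y \<bullet> y)" by (simp add: nn sum_distrib_left)
  finally show "y \<bullet> (?W *v y) \<le> ?L * (y \<bullet> y)" .
qed


lemma exp_finite:
  fixes f :: "'a \<Rightarrow> real"
  assumes "finite (set_pmf M)"
  shows "measure_pmf.expectation M f = (\<Sum>a\<in>set_pmf M. f a * pmf M a)"
  by (rule integral_measure_pmf_real[OF assms]) auto

lemma prod_bern:
  assumes "finite N" "A \<subseteq> N"
  shows "(\<Prod>x\<in>N. if x \<in> A then p else 1 - p) = p ^ card A * (1 - p) ^ (card N - card A)"
proof -
  have "(\<Prod>x\<in>N. if x \<in> A then p else 1 - p) = prod (\<lambda>_. p) (N \<inter> {x. x \<in> A}) * prod (\<lambda>_. 1 - p) (N \<inter> - {x. x \<in> A})"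
    by (rule prod.If_cases) (rule assms(1))
  also have "N \<inter> {x. x \<in> A} = A" using assms by auto
  also have "N \<inter> - {x. x \<in> A} = N - A" by auto
  finally show ?thesis using assms by (simp add: card_Diff_subset finite_subset)
qed

lemma Pi_sum:
  fixes N :: "'n::finite set" and h :: "('n \<Rightarrow> bool) \<Rightarrow> real"
  assumes p: "0 \<le> p" "p \<le> 1"
  shows "(\<Sum>F\<in>UNIV. pmf (Pi_pmf N False (\<lambda>_. bernoulli_pmf p)) F * h F)
       = (\<Sum>A\<in>Pow N. p ^ card A * (1 - p) ^ (card N - card A) * h (\<lambda>x. x \<in> A))"
proof -
  define S where "S = {F :: 'n \<Rightarrow> bool. \<forall>x. x \<notin> N \<longrightarrow> F x = False}"
  have "(\<Sum>F\<in>UNIV. pmf (Pi_pmf N False (\<lambda>_. bernoulli_pmf p)) F * h F)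
      = (\<Sum>F\<in>S. pmf (Pi_pmf N False (\<lambda>_. bernoulli_pmf p)) F * h F)"
    by (rule sum.mono_neutral_right) (auto simp: S_def pmf_Pi)
  also have "\<dots> = (\<Sum>A\<in>Pow N. p ^ card A * (1 - p) ^ (card N - card A) * h (\<lambda>x. x \<in> A))"
  proof (rule sum.reindex_bij_witness[of _ "\<lambda>A x. x \<in> A" "\<lambda>F. {x. F x}"])
    fix F assume "F \<in> S" thus "(\<lambda>x. x \<in> {x. F x}) = F" by auto
  next
    fix F assume "F \<in> S" thus "{x. F x} \<in> Pow N" by (auto simp: S_def)
  next
    fix A assume "A \<in> Pow N" thus "{x. x \<in> A} = A" by auto
  next
    fix A assume "A \<in> Pow N" thus "(\<lambda>x. x \<in> A) \<in> S" by (auto simp: S_def)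
  next
    fix F assume F: "F \<in> S"
    define A where "A = {x. F x}"
    have AN: "A \<subseteq> N" using F by (auto simp: S_def A_def)
    have FA: "F = (\<lambda>x. x \<in> A)" by (auto simp: A_def)
    have "pmf (Pi_pmf N False (\<lambda>_. bernoulli_pmf p)) F = (\<Prod>x\<in>N. if x \<in> A then p else 1 - p)"
      using F p by (auto simp: pmf_Pi S_def FA intro!: prod.cong)
    also have "\<dots> = p ^ card A * (1 - p) ^ (card N - card A)" by (rule prod_bern[OF _ AN]) simp
    finally show "p ^ card {x. F x} * (1 - p) ^ (card N - card {x. F x}) * h (\<lambda>x. x \<in> {x. F x})
        = pmf (Pi_pmf N False (\<lambda>_. bernoulli_pmf p)) F * h F"
      by (simp add: A_def)
  qed
  finally show ?thesis .
qed

lemma Pi_total: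
  fixes N :: "'n::finite set" and p :: real
  assumes p: "0 \<le> p" "p \<le> 1"
  shows "(\<Sum>A\<in>Pow N. p ^ card A * (1 - p) ^ (card N - card A)) = 1"
proof -
  have "(\<Sum>F\<in>UNIV. pmf (Pi_pmf N False (\<lambda>_. bernoulli_pmf p)) F * 1) = 1"
    using sum_pmf_eq_1[of UNIV "Pi_pmf N False (\<lambda>_. bernoulli_pmf p)"] by simp
  thus ?thesis using Pi_sum[OF p, of N "\<lambda>_. 1"] by simp
qed

definition maxset :: "('n \<Rightarrow> real) \<Rightarrow> 'n set \<Rightarrow> 'n set" where
  "maxset f A = {t \<in> A. \<forall>u\<in>A. f u \<le> f t}"

lemma maxset_props:
  fixes A :: "'n::finite set"
  assumes "A \<noteq> {}"
  shows "maxset f A \<noteq> {}" "maxset f A \<subseteq> A" "\<And>t. t \<in> maxset f A \<Longrightarrow> f t = Max (f ` A)"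
proof -
  have fin: "finite (f ` A)" by simp
  have "Max (f ` A) \<in> f ` A" using Max_in[OF fin] assms by simp
  then obtain t0 where t0: "t0 \<in> A" "f t0 = Max (f ` A)" by auto
  have "t0 \<in> maxset f A" using t0 Max_ge[OF fin] by (auto simp: maxset_def)
  thus "maxset f A \<noteq> {}" by auto
  show "maxset f A \<subseteq> A" by (auto simp: maxset_def)
  fix t assume t: "t \<in> maxset f A"
  hence "f t \<le> Max (f ` A)" using Max_ge[OF fin] by (auto simp: maxset_def)
  moreover have "f t0 \<le> f t" using t t0 by (auto simp: maxset_def)
  ultimately show "f t = Max (f ` A)" using t0 by simp
qed

lemma partner_eq:
  "partner_pmf E p x s = bind_pmf (Pi_pmf (nbrs E s) False (\<lambda>_. bernoulli_pmf p))
       (\<lambda>F. if {t \<in> nbrs E s. F t} = {} then pmf_of_set (nbrs E s)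
            else pmf_of_set (maxset (\<lambda>t. (x $ s - x $ t)\<^sup>2) {t \<in> nbrs E s. F t}))"
  unfolding partner_pmf_def maxset_def Let_def by simp

lemma partner_set:
  fixes E :: "'n::finite \<Rightarrow> 'n \<Rightarrow> bool"
  assumes ne: "nbrs E s \<noteq> {}"
  shows "set_pmf (partner_pmf E p x s) \<subseteq> nbrs E s"
proof -
  have "set_pmf (if {t \<in> nbrs E s. F t} = {} then pmf_of_set (nbrs E s)
            else pmf_of_set (maxset (\<lambda>t. (x $ s - x $ t)\<^sup>2) {t \<in> nbrs E s. F t})) \<subseteq> nbrs E s" for F
  proof (cases "{t \<in> nbrs E s. F t} = {}")
    case True thus ?thesis using ne by simp
  next
    case False
    thus ?thesis using maxset_props[OF False, where f="\<lambda>t. (x $ s - x $ t)\<^sup>2"] by auto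
  qed
  thus ?thesis unfolding partner_eq by (auto simp: set_bind_pmf)
qed

lemma partner_exp:
  fixes E :: "'n::finite \<Rightarrow> 'n \<Rightarrow> bool"
  assumes ne: "nbrs E s \<noteq> {}" and p: "0 \<le> p" "p \<le> 1"
  shows "measure_pmf.expectation (partner_pmf E p x s) (\<lambda>t. (x $ s - x $ t)\<^sup>2)
     = (\<Sum>A\<in>Pow (nbrs E s) - {{}}.
            p ^ card A * (1 - p) ^ (card (nbrs E s) - card A) * Max ((\<lambda>t. (x $ s - x $ t)\<^sup>2) ` A))
        + (1 - p) ^ card (nbrs E s) * (1 / real (card (nbrs E s)) * (\<Sum>t\<in>nbrs E s. (x $ s - x $ t)\<^sup>2))"
proof -
  define N where "N = nbrs E s"
  define f where "f t = (x $ s - x $ t)\<^sup>2" for t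
  define g where "g F = (if {t \<in> N. F t} = {} then pmf_of_set N else pmf_of_set (maxset f {t \<in> N. F t}))"
    for F
  define w where "w A = p ^ card A * (1 - p) ^ (card N - card A)" for A :: "'n set"
  have pe: "partner_pmf E p x s = bind_pmf (Pi_pmf N False (\<lambda>_. bernoulli_pmf p)) g"
    unfolding partner_eq g_def N_def f_def ..
  have "measure_pmf.expectation (partner_pmf E p x s) f
      = (\<Sum>F\<in>UNIV. pmf (Pi_pmf N False (\<lambda>_. bernoulli_pmf p)) F *\<^sub>R measure_pmf.expectation (g F) f)"
    unfolding pe by (rule pmf_expectation_bind) auto
  also have "\<dots> = (\<Sum>A\<in>Pow N. w A * measure_pmf.expectation (g (\<lambda>x. x \<in> A)) f)"
    using Pi_sum[OF p, of N "\<lambda>F. measure_pmf.expectation (g F) f"] by (simp add: w_def)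
  also have "\<dots> = (\<Sum>A\<in>Pow N. w A * (if A = {} then sum f N / real (card N) else Max (f ` A)))"
  proof (rule sum.cong[OF refl])
    fix A assume A: "A \<in> Pow N"
    hence eqA: "{t \<in> N. t \<in> A} = A" by auto
    show "w A * measure_pmf.expectation (g (\<lambda>x. x \<in> A)) f
        = w A * (if A = {} then sum f N / real (card N) else Max (f ` A))"
    proof (cases "A = {}")
      case True
      thus ?thesis using ne by (simp add: g_def eqA N_def integral_pmf_of_set)
    next
      case False
      have "measure_pmf.expectation (pmf_of_set (maxset f A)) f = Max (f ` A)"
      proof -
        have "measure_pmf.expectation (pmf_of_set (maxset f A)) f = sum f (maxset f A) / real (card (maxset f A))"
          using maxset_props(1)[OF False] by (simp add: integral_pmf_of_set)
        also have "sum f (maxset f A) = real (card (maxset f A)) * Max (f ` A)"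
        proof -
          have "sum f (maxset f A) = sum (\<lambda>_. Max (f ` A)) (maxset f A)"
            by (rule sum.cong[OF refl]) (rule maxset_props(3)[OF False])
          thus ?thesis by simp
        qed
        also have "real (card (maxset f A)) \<noteq> 0" using maxset_props(1)[OF False] by simp
        hence "real (card (maxset f A)) * Max (f ` A) / real (card (maxset f A)) = Max (f ` A)" by simp
        finally show ?thesis .
      qed
      thus ?thesis using False by (simp add: g_def eqA)
    qed
  qed
  also have "\<dots> = w {} * (sum f N / real (card N)) + (\<Sum>A\<in>Pow N - {{}}. w A * Max (f ` A))"
    by (subst sum.remove[of _ "{}"]) (auto intro!: sum.cong)
  finally show ?thesis by (simp add: w_def N_def f_def[abs_def] algebra_simps)
qed


lemma sym_avg:
  fixes N :: "'n::finite set" and w :: "'n set \<Rightarrow> real" and f :: "'n \<Rightarrow> real"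
  assumes wc: "\<And>A B. card A = card B \<Longrightarrow> w A = w B" and t0: "t0 \<in> N"
  shows "(\<Sum>A\<in>Pow N - {{}}. w A * (sum f A / real (card A)))
       = (\<Sum>A\<in>Pow N - {{}}. if t0 \<in> A then w A / real (card A) else 0) * sum f N"
proof -
  define P where "P = Pow N - {{}}"
  define c where "c t = (\<Sum>A\<in>P. if t \<in> A then w A / real (card A) else 0)" for t
  have c_eq: "c t = c t0" if t: "t \<in> N" for t
  proof (cases "t = t0")
    case True thus ?thesis by simp
  next
    case False
    define \<sigma> where "\<sigma> = Transposition.transpose t t0"
    have inv: "\<sigma> ` (\<sigma> ` A) = A" for A
      by (simp add: image_comp \<sigma>_def transpose_comp_involutory)
    have cardi: "card (\<sigma> ` A) = card A" for A
      by (rule card_image) (simp add: \<sigma>_def)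
    have sN: "\<sigma> ` N = N" unfolding \<sigma>_def by (rule transpose_image_eq) (simp add: t t0)
    have mem: "t \<in> \<sigma> ` A \<longleftrightarrow> t0 \<in> A" for A by (simp add: \<sigma>_def in_transpose_image_iff)
    show ?thesis unfolding c_def
    proof (rule sum.reindex_bij_witness[of _ "\<lambda>A. \<sigma> ` A" "\<lambda>A. \<sigma> ` A"])
      fix A assume "A \<in> P" show "\<sigma> ` \<sigma> ` A = A" by (rule inv)
    next
      fix A assume A: "A \<in> P"
      thus "\<sigma> ` A \<in> P" using sN by (auto simp: P_def)
    next
      fix A assume "A \<in> P" show "\<sigma> ` \<sigma> ` A = A" by (rule inv)
    next
      fix A assume A: "A \<in> P"
      thus "\<sigma> ` A \<in> P" using sN by (auto simp: P_def)
    next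
      fix A assume A: "A \<in> P"
      have mem': "t0 \<in> \<sigma> ` A \<longleftrightarrow> t \<in> A" by (simp add: \<sigma>_def in_transpose_image_iff)
      show "(if t0 \<in> \<sigma> ` A then w (\<sigma> ` A) / real (card (\<sigma> ` A)) else 0)
          = (if t \<in> A then w A / real (card A) else 0)"
        using mem' cardi[of A] wc[of "\<sigma> ` A" A] by simp
    qed
  qed
  have "(\<Sum>A\<in>P. w A * (sum f A / real (card A)))
      = (\<Sum>A\<in>P. \<Sum>t\<in>N. (if t \<in> A then w A / real (card A) else 0) * f t)"
  proof (rule sum.cong[OF refl])
    fix A assume A: "A \<in> P"
    have "sum f A = (\<Sum>t\<in>N. if t \<in> A then f t else 0)"
    proof -
      have "(\<Sum>t\<in>N. if t \<in> A then f t else 0) = sum f (N \<inter> A)" by (rule sum.inter_restrict[symmetric]) simp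
      also have "N \<inter> A = A" using A by (auto simp: P_def)
      finally show ?thesis by simp
    qed
    thus "w A * (sum f A / real (card A)) = (\<Sum>t\<in>N. (if t \<in> A then w A / real (card A) else 0) * f t)"
      by (simp add: sum_distrib_left sum_divide_distrib) (rule sum.cong[OF refl], simp)
  qed
  also have "\<dots> = (\<Sum>t\<in>N. \<Sum>A\<in>P. (if t \<in> A then w A / real (card A) else 0) * f t)"
    by (rule sum.swap)
  also have "\<dots> = (\<Sum>t\<in>N. c t * f t)" by (simp add: c_def sum_distrib_right)
  also have "\<dots> = (\<Sum>t\<in>N. c t0 * f t)" by (rule sum.cong[OF refl]) (simp add: c_eq)
  also have "\<dots> = c t0 * sum f N" by (simp add: sum_distrib_left)
  finally show ?thesis by (simp add: P_def c_def)
qed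

lemma sgg_ge_rg_local:
  fixes N :: "'n::finite set" and f :: "'n \<Rightarrow> real" and p :: real
  assumes p: "0 \<le> p" "p \<le> 1" and ne: "N \<noteq> {}"
  shows "1 / real (card N) * sum f N \<le>
     (\<Sum>A\<in>Pow N - {{}}. p ^ card A * (1 - p) ^ (card N - card A) * Max (f ` A))
       + (1 - p) ^ card N * (1 / real (card N) * sum f N)"
proof -
  define w where "w A = p ^ card A * (1 - p) ^ (card N - card A)" for A :: "'n set"
  define P where "P = Pow N - {{}}"
  obtain t0 where t0: "t0 \<in> N" using ne by auto
  have wc: "card A = card B \<Longrightarrow> w A = w B" for A B by (simp add: w_def)
  define c where "c = (\<Sum>A\<in>P. if t0 \<in> A then w A / real (card A) else 0)"
  have sym: "(\<Sum>A\<in>P. w A * (sum g A / real (card A))) = c * sum g N" for g :: "'n \<Rightarrow> real"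
    unfolding P_def c_def by (rule sym_avg[OF wc t0])
  have w0: "w A \<ge> 0" for A using p by (simp add: w_def)
  have "(\<Sum>A\<in>P. w A * (sum f A / real (card A))) \<le> (\<Sum>A\<in>P. w A * Max (f ` A))"
  proof (rule sum_mono)
    fix A assume A: "A \<in> P"
    hence Ane: "A \<noteq> {}" by (auto simp: P_def)
    have "sum f A \<le> real (card A) * Max (f ` A)"
      by (rule sum_bounded_above) simp
    hence "sum f A / real (card A) \<le> Max (f ` A)" using Ane by (simp add: divide_le_eq mult.commute)
    thus "w A * (sum f A / real (card A)) \<le> w A * Max (f ` A)" using w0 by (rule mult_left_mono)
  qed
  hence ineq: "c * sum f N \<le> (\<Sum>A\<in>P. w A * Max (f ` A))" using sym[of f] by simp
  have "(\<Sum>A\<in>P. w A * (sum (\<lambda>_. 1) A / real (card A))) = (\<Sum>A\<in>P. w A)"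
    by (rule sum.cong[OF refl]) (auto simp: P_def)
  hence cN: "c * real (card N) = (\<Sum>A\<in>P. w A)" using sym[of "\<lambda>_. 1"] by simp
  have "(\<Sum>A\<in>Pow N. w A) = 1" unfolding w_def by (rule Pi_total[OF p])
  moreover have "(\<Sum>A\<in>Pow N. w A) = w {} + (\<Sum>A\<in>P. w A)"
    unfolding P_def by (subst sum.remove[of _ "{}"]) auto
  ultimately have "(\<Sum>A\<in>P. w A) = 1 - (1 - p) ^ card N" by (simp add: w_def)
  hence cval: "c = (1 - (1 - p) ^ card N) / real (card N)" using cN ne by (simp add: field_simps)
  have cn: "real (card N) \<noteq> 0" using ne by simp
  have "1 / real (card N) * sum f N = c * sum f N + (1 - p) ^ card N * (1 / real (card N) * sum f N)"
    using cn by (simp add: cval field_simps)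
  also have "\<dots> \<le> (\<Sum>A\<in>P. w A * Max (f ` A)) + (1 - p) ^ card N * (1 / real (card N) * sum f N)"
    using ineq by simp
  finally show ?thesis by (simp add: P_def w_def)
qed

lemma R_SGG_ge:
  fixes E :: "'n::finite \<Rightarrow> 'n \<Rightarrow> bool"
  assumes ne: "\<And>s. nbrs E s \<noteq> {}" and p: "0 \<le> p" "p \<le> 1"
  shows "R_RG E x \<le> R_SGG E x p"
  unfolding R_RG_def R_SGG_def
  by (intro mult_left_mono sum_mono sgg_ge_rg_local[OF p ne]) simp


definition vsum :: "real^'n::finite \<Rightarrow> real" where "vsum x = (\<Sum>i\<in>UNIV. x $ i)"

lemma norm2_sum: "(norm (z::real^'n::finite))\<^sup>2 = (\<Sum>i\<in>UNIV. (z $ i)\<^sup>2)"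
proof -
  have "z \<bullet> z = (norm z)\<^sup>2" by (rule dot_square_norm)
  moreover have "z \<bullet> z = (\<Sum>i\<in>UNIV. (z $ i)\<^sup>2)" by (simp add: inner_vec_def power2_eq_square)
  ultimately show ?thesis by simp
qed

lemma avg_upd_vsum: "vsum (avg_upd x s t) = vsum x"
proof (cases "s = t")
  case True
  hence "avg_upd x s t = x" by (simp add: avg_upd_def vec_eq_iff)
  thus ?thesis by simp
next
  case False
  have "(\<Sum>i\<in>UNIV. (avg_upd x s t) $ i) = (\<Sum>i\<in>UNIV. x $ i + ((if i = s then (x $ t - x $ s) / 2 else 0)
        + (if i = t then (x $ s - x $ t) / 2 else 0)))"
    by (rule sum.cong[OF refl]) (auto simp: avg_upd_def False field_simps)
  also have "\<dots> = (\<Sum>i\<in>UNIV. x $ i)" using False by (simp add: sum.distrib field_simps)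
  finally show ?thesis by (simp add: vsum_def)
qed

lemma avg_upd_norm:
  fixes c :: "real^'n::finite"
  assumes st: "s \<noteq> t" and cc: "c $ s = c $ t"
  shows "(norm (avg_upd x s t - c))\<^sup>2 = (norm (x - c))\<^sup>2 - (x $ s - x $ t)\<^sup>2 / 2"
proof -
  define m where "m = (x $ s + x $ t) / 2"
  define ds where "ds = (m - c $ s)\<^sup>2 - (x $ s - c $ s)\<^sup>2"
  define dt where "dt = (m - c $ t)\<^sup>2 - (x $ t - c $ t)\<^sup>2"
  have "(\<Sum>i\<in>UNIV. ((avg_upd x s t - c) $ i)\<^sup>2)
      = (\<Sum>i\<in>UNIV. ((x - c) $ i)\<^sup>2 + ((if i = s then ds else 0) + (if i = t then dt else 0)))"
    by (rule sum.cong[OF refl]) (auto simp: avg_upd_def ds_def dt_def m_def st)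
  also have "\<dots> = (\<Sum>i\<in>UNIV. ((x - c) $ i)\<^sup>2) + ds + dt" using st by (simp add: sum.distrib)
  finally have h: "(\<Sum>i\<in>UNIV. ((avg_upd x s t - c) $ i)\<^sup>2) = (\<Sum>i\<in>UNIV. ((x - c) $ i)\<^sup>2) + ds + dt" .
  have "ds + dt = - (x $ s - x $ t)\<^sup>2 / 2"
    unfolding ds_def dt_def m_def cc by (simp add: power2_eq_square field_simps)
  thus ?thesis using h by (simp add: norm2_sum)
qed

lemma step_set:
  "set_pmf (sgg_step E p x) \<subseteq> (\<lambda>(s, t). avg_upd x s t) ` UNIV"
  unfolding sgg_step_def by (auto simp: set_bind_pmf)

lemma step_finite: "finite (set_pmf (sgg_step E p (x :: real^'n::finite)))"
  by (rule finite_subset[OF step_set]) simp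

lemma step_vsum: "z \<in> set_pmf (sgg_step E p x) \<Longrightarrow> vsum z = vsum x"
  using step_set[of E p x] avg_upd_vsum by fastforce

lemma dist_props:
  "finite (set_pmf (sgg_dist E p a0 l)) \<and> (\<forall>z\<in>set_pmf (sgg_dist E p a0 l). vsum z = vsum a0)"
proof (induction l)
  case 0 thus ?case by simp
next
  case (Suc l)
  have "set_pmf (sgg_dist E p a0 (Suc l)) = (\<Union>z\<in>set_pmf (sgg_dist E p a0 l). set_pmf (sgg_step E p z))"
    by (simp add: set_bind_pmf)
  thus ?case using Suc step_finite by (fastforce dest: step_vsum)
qed

lemma step_exp:
  fixes E :: "'n::finite \<Rightarrow> 'n \<Rightarrow> bool" and c :: "real^'n"
  assumes ne: "\<And>s. nbrs E s \<noteq> {}" and irr: "irrefl_g E" and p: "0 \<le> p" "p \<le> 1"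
    and cc: "\<And>i j. c $ i = c $ j"
  shows "measure_pmf.expectation (sgg_step E p x) (\<lambda>z. (norm (z - c))\<^sup>2) = (norm (x - c))\<^sup>2 - R_SGG E x p"
proof -
  let ?e = "\<lambda>z. (norm (z - c))\<^sup>2"
  define G where "G s = measure_pmf.expectation (partner_pmf E p x s) (\<lambda>t. (x $ s - x $ t)\<^sup>2)" for s
  have one: "measure_pmf.expectation (map_pmf (avg_upd x s) (partner_pmf E p x s)) ?e = ?e x - G s / 2" for s
  proof -
    let ?M = "partner_pmf E p x s"
    have fin: "finite (set_pmf ?M)" by simp
    have "measure_pmf.expectation (map_pmf (avg_upd x s) ?M) ?e = measure_pmf.expectation ?M (\<lambda>t. ?e (avg_upd x s t))"
      by (rule integral_map_pmf)
    also have "\<dots> = (\<Sum>t\<in>set_pmf ?M. ?e (avg_upd x s t) * pmf ?M t)" by (rule exp_finite[OF fin])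
    also have "\<dots> = (\<Sum>t\<in>set_pmf ?M. (?e x - (x $ s - x $ t)\<^sup>2 / 2) * pmf ?M t)"
    proof (rule sum.cong[OF refl])
      fix t assume "t \<in> set_pmf ?M"
      hence "t \<in> nbrs E s" using partner_set[OF ne] by blast
      hence "s \<noteq> t" using irr by (auto simp: irrefl_g_def nbrs_def)
      thus "?e (avg_upd x s t) * pmf ?M t = (?e x - (x $ s - x $ t)\<^sup>2 / 2) * pmf ?M t"
        using avg_upd_norm[of s t c x] cc by simp
    qed
    also have "\<dots> = ?e x * (\<Sum>t\<in>set_pmf ?M. pmf ?M t) - (\<Sum>t\<in>set_pmf ?M. (x $ s - x $ t)\<^sup>2 * pmf ?M t) / 2"
      by (simp add: left_diff_distrib sum_subtractf sum_distrib_left sum_divide_distrib)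
    also have "(\<Sum>t\<in>set_pmf ?M. pmf ?M t) = 1" by (rule sum_pmf_eq_1) auto
    also have "(\<Sum>t\<in>set_pmf ?M. (x $ s - x $ t)\<^sup>2 * pmf ?M t) = G s"
      unfolding G_def by (rule exp_finite[OF fin, symmetric])
    finally show ?thesis by simp
  qed
  have "measure_pmf.expectation (sgg_step E p x) ?e
      = (\<Sum>s\<in>UNIV. measure_pmf.expectation (map_pmf (avg_upd x s) (partner_pmf E p x s)) ?e /\<^sub>R real (card (UNIV :: 'n set)))"
    unfolding sgg_step_def by (rule pmf_expectation_bind_pmf_of_set) auto
  also have "\<dots> = (\<Sum>s\<in>UNIV. (?e x - G s / 2) / real CARD('n))"
    by (rule sum.cong[OF refl]) (simp only: one, simp add: field_simps)
  also have "\<dots> = (\<Sum>s\<in>(UNIV::'n set). ?e x / real CARD('n)) - (\<Sum>s\<in>UNIV. G s / (2 * real CARD('n)))"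
    by (simp only: diff_divide_distrib sum_subtractf divide_divide_eq_left)
  also have "(\<Sum>s\<in>(UNIV::'n set). ?e x / real CARD('n)) = ?e x" by simp
  also have "(\<Sum>s\<in>UNIV. G s / (2 * real CARD('n))) = R_SGG E x p"
    unfolding R_SGG_def G_def partner_exp[OF ne p] by (simp add: sum_divide_distrib[symmetric])
  finally show ?thesis .
qed


context
  fixes E :: "'n::finite \<Rightarrow> 'n \<Rightarrow> bool" and p :: real and a0 :: "real^'n"
  assumes N2: "CARD('n) \<ge> 2" and conn: "connected_graph E" and p0: "0 \<le> p" and p1: "p \<le> 1"
begin

abbreviation "abar \<equiv> avg_vec a0"
abbreviation "ee z \<equiv> (norm (z - abar))\<^sup>2"
abbreviation "LL \<equiv> lambda2 (W_bar E)"

lemma irrE: "irrefl_g E" using conn by (rule conn_irrefl)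
lemma neE: "nbrs E s \<noteq> {}" using conn_nbrs_ne[OF conn N2] .

lemma abar_cc: "abar $ i = abar $ j" by (simp add: avg_vec_def)

lemma key_ineq:
  assumes vz: "vsum z = vsum a0"
  shows "ee z - R_RG E z \<le> LL * ee z"
proof -
  define y where "y = z - abar"
  have "one_vec \<bullet> y = vsum z - vsum abar"
    by (simp add: y_def one_vec_def inner_vec_def vsum_def sum_subtractf)
  also have "vsum abar = vsum a0" by (simp add: vsum_def avg_vec_def)
  finally have oy: "one_vec \<bullet> y = 0" using vz by simp
  have Ry: "R_RG E y = R_RG E z"
  proof -
    have "(y $ s - y $ t) = (z $ s - z $ t)" for s t using abar_cc[of s t] by (simp add: y_def)
    thus ?thesis by (simp add: R_RG_def)
  qed
  have yy: "y \<bullet> y = ee z" by (simp add: y_def dot_square_norm)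
  have "y \<bullet> (W_bar E *v y) = y \<bullet> y - R_RG E y" by (rule W_bar_R[OF irrE neE])
  moreover have "y \<bullet> (W_bar E *v y) \<le> LL * (y \<bullet> y)" by (rule lambda2_W_bar(3)[OF conn N2 oy])
  ultimately show ?thesis using Ry yy by simp
qed

lemma E_sum: "sgg_E E p a0 l = (\<Sum>z\<in>set_pmf (sgg_dist E p a0 l). ee z * pmf (sgg_dist E p a0 l) z)"
  unfolding sgg_E_def by (rule exp_finite) (use dist_props in blast)

lemma E_nonneg: "sgg_E E p a0 l \<ge> 0"
  unfolding E_sum by (intro sum_nonneg) simp

lemma eta_sum: "sgg_eta E p a0 (Suc k) =
   (\<Sum>z\<in>set_pmf (sgg_dist E p a0 k). (R_SGG E z p - R_RG E z) * pmf (sgg_dist E p a0 k) z)"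
  unfolding sgg_eta_def by simp (rule exp_finite, use dist_props in blast)

lemma eta_nonneg: "sgg_eta E p a0 (Suc k) \<ge> 0"
  unfolding eta_sum
  by (intro sum_nonneg mult_nonneg_nonneg) (use R_SGG_ge[OF neE p0 p1] in auto)

lemma E_Suc: "sgg_E E p a0 (Suc k) =
   (\<Sum>z\<in>set_pmf (sgg_dist E p a0 k). pmf (sgg_dist E p a0 k) z * (ee z - R_SGG E z p))"
proof -
  have fin: "finite (set_pmf (sgg_dist E p a0 k))" using dist_props by blast
  have "sgg_E E p a0 (Suc k) = (\<Sum>z\<in>set_pmf (sgg_dist E p a0 k).
      pmf (sgg_dist E p a0 k) z *\<^sub>R measure_pmf.expectation (sgg_step E p z) (\<lambda>x. ee x))"
    unfolding sgg_E_def sgg_dist.simps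
    by (rule pmf_expectation_bind[OF fin]) (auto simp: step_finite)
  also have "\<dots> = (\<Sum>z\<in>set_pmf (sgg_dist E p a0 k). pmf (sgg_dist E p a0 k) z * (ee z - R_SGG E z p))"
    by (rule sum.cong[OF refl]) (simp add: step_exp[OF neE irrE p0 p1 abar_cc])
  finally show ?thesis .
qed

lemma rec_ineq: "sgg_E E p a0 (Suc k) \<le> LL * sgg_E E p a0 k - sgg_eta E p a0 (Suc k)"
proof -
  let ?M = "sgg_dist E p a0 k"
  have "sgg_E E p a0 (Suc k) = (\<Sum>z\<in>set_pmf ?M. pmf ?M z * (ee z - R_RG E z))
         - (\<Sum>z\<in>set_pmf ?M. (R_SGG E z p - R_RG E z) * pmf ?M z)"
    unfolding E_Suc by (simp add: sum_subtractf[symmetric] algebra_simps)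
  also have "(\<Sum>z\<in>set_pmf ?M. pmf ?M z * (ee z - R_RG E z)) \<le> (\<Sum>z\<in>set_pmf ?M. pmf ?M z * (LL * ee z))"
  proof (rule sum_mono)
    fix z assume "z \<in> set_pmf ?M"
    hence "vsum z = vsum a0" using dist_props by blast
    thus "pmf ?M z * (ee z - R_RG E z) \<le> pmf ?M z * (LL * ee z)"
      by (intro mult_left_mono key_ineq) auto
  qed
  also have "(\<Sum>z\<in>set_pmf ?M. pmf ?M z * (LL * ee z)) = LL * sgg_E E p a0 k"
    unfolding E_sum by (simp add: sum_distrib_left algebra_simps)
  finally show ?thesis unfolding eta_sum by simp
qed

lemma L0: "0 \<le> LL" using lambda2_W_bar(1)[OF conn N2] .
lemma L1: "LL < 1" using lambda2_W_bar(2)[OF conn N2] .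

lemma beta_props:
  assumes "i \<ge> 1"
  shows "sgg_beta E p a0 i \<ge> 0"
    "sgg_E E p a0 i \<le> (LL - sgg_beta E p a0 i) * sgg_E E p a0 (i - 1)"
    "LL - sgg_beta E p a0 i \<ge> 0"
proof -
  obtain k where i: "i = Suc k" using assms by (cases i) auto
  have r: "sgg_E E p a0 (Suc k) \<le> LL * sgg_E E p a0 k - sgg_eta E p a0 (Suc k)" by (rule rec_ineq)
  have eta: "sgg_eta E p a0 (Suc k) \<ge> 0" by (rule eta_nonneg)
  have Ek: "sgg_E E p a0 k \<ge> 0" by (rule E_nonneg)
  have ESk: "sgg_E E p a0 (Suc k) \<ge> 0" by (rule E_nonneg)
  show "sgg_beta E p a0 i \<ge> 0" using eta Ek by (simp add: sgg_beta_def i)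
  show "sgg_E E p a0 i \<le> (LL - sgg_beta E p a0 i) * sgg_E E p a0 (i - 1)"
  proof (cases "sgg_E E p a0 k > 0")
    case True
    hence "(LL - sgg_beta E p a0 i) * sgg_E E p a0 (i - 1) = LL * sgg_E E p a0 k - sgg_eta E p a0 (Suc k)"
      by (simp add: sgg_beta_def i field_simps)
    thus ?thesis using r i by simp
  next
    case False
    hence "sgg_E E p a0 k = 0" using Ek by simp
    thus ?thesis using r eta i by (simp add: sgg_beta_def)
  qed
  show "LL - sgg_beta E p a0 i \<ge> 0"
  proof (cases "sgg_E E p a0 k > 0")
    case True
    have "0 \<le> (LL - sgg_beta E p a0 i) * sgg_E E p a0 k"
      using \<open>sgg_E E p a0 i \<le> (LL - sgg_beta E p a0 i) * sgg_E E p a0 (i - 1)\<close> ESk i by simp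
    thus ?thesis using True by (simp add: zero_le_mult_iff)
  next
    case False
    thus ?thesis using L0 by (simp add: sgg_beta_def i)
  qed
qed

lemma E0: "sgg_E E p a0 0 = ee a0"
  unfolding E_sum by simp

lemma prod_bound: "sgg_E E p a0 l \<le> ee a0 * (\<Prod>i=1..l. LL - sgg_beta E p a0 i)"
proof (induction l)
  case 0 thus ?case by (simp add: E0)
next
  case (Suc l)
  have "sgg_E E p a0 (Suc l) \<le> (LL - sgg_beta E p a0 (Suc l)) * sgg_E E p a0 l"
    using beta_props(2)[of "Suc l"] by simp
  also have "\<dots> \<le> (LL - sgg_beta E p a0 (Suc l)) * (ee a0 * (\<Prod>i=1..l. LL - sgg_beta E p a0 i))"
    by (rule mult_left_mono[OF Suc.IH beta_props(3)]) simp
  also have "\<dots> = ee a0 * (\<Prod>i=1..Suc l. LL - sgg_beta E p a0 i)"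
    by (simp add: prod.cl_ivl_Suc algebra_simps)
  finally show ?case .
qed

lemma prod_min:
  assumes "l \<ge> 1"
  shows "ee a0 * (\<Prod>i=1..l. LL - sgg_beta E p a0 i) \<le> ee a0 * (LL - Min (sgg_beta E p a0 ` {1..l})) ^ l"
proof (rule mult_left_mono)
  have "(\<Prod>i=1..l. LL - sgg_beta E p a0 i) \<le> (\<Prod>i=1..l. LL - Min (sgg_beta E p a0 ` {1..l}))"
  proof (rule prod_mono)
    fix i assume i: "i \<in> {1..l}"
    have "Min (sgg_beta E p a0 ` {1..l}) \<le> sgg_beta E p a0 i" using i by (intro Min_le) auto
    thus "0 \<le> LL - sgg_beta E p a0 i \<and> LL - sgg_beta E p a0 i \<le> LL - Min (sgg_beta E p a0 ` {1..l})"
      using beta_props(3)[of i] i by auto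
  qed
  thus "(\<Prod>i=1..l. LL - sgg_beta E p a0 i) \<le> (LL - Min (sgg_beta E p a0 ` {1..l})) ^ l" by simp
qed simp

lemma min_nonneg:
  assumes "l \<ge> 1"
  shows "Min (sgg_beta E p a0 ` {1..l}) \<ge> 0"
  using assms by (subst Min_ge_iff) (auto intro: beta_props(1))

lemma markov:
  assumes ne: "a0 \<noteq> abar" and eps: "0 < \<epsilon>" and l: "l \<ge> 1"
  shows "measure_pmf.prob (sgg_dist E p a0 l) {x. norm (x - abar) / norm (a0 - abar) \<ge> \<epsilon>}
        \<le> (LL - Min (sgg_beta E p a0 ` {1..l})) ^ l / \<epsilon>\<^sup>2"
proof -
  let ?M = "sgg_dist E p a0 l"
  let ?S = "{x. norm (x - abar) / norm (a0 - abar) \<ge> \<epsilon>}"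
  let ?rho = "LL - Min (sgg_beta E p a0 ` {1..l})"
  define r where "r = norm (a0 - abar)"
  have r0: "r > 0" using ne by (simp add: r_def)
  have fin: "finite (set_pmf ?M)" using dist_props by blast
  have "measure_pmf.prob ?M ?S = measure_pmf.prob ?M (?S \<inter> set_pmf ?M)" by (simp add: measure_Int_set_pmf)
  also have "\<dots> = (\<Sum>z\<in>?S \<inter> set_pmf ?M. pmf ?M z)" using fin by (simp add: measure_measure_pmf_finite)
  finally have pr: "measure_pmf.prob ?M ?S = (\<Sum>z\<in>?S \<inter> set_pmf ?M. pmf ?M z)" .
  have "\<epsilon>\<^sup>2 * r\<^sup>2 * measure_pmf.prob ?M ?S = (\<Sum>z\<in>?S \<inter> set_pmf ?M. \<epsilon>\<^sup>2 * r\<^sup>2 * pmf ?M z)"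
    by (simp add: pr sum_distrib_left)
  also have "\<dots> \<le> (\<Sum>z\<in>?S \<inter> set_pmf ?M. ee z * pmf ?M z)"
  proof (rule sum_mono)
    fix z assume "z \<in> ?S \<inter> set_pmf ?M"
    hence "\<epsilon> \<le> norm (z - abar) / r" by (simp add: r_def)
    hence "\<epsilon> * r \<le> norm (z - abar)" using r0 by (simp add: le_divide_eq)
    hence "(\<epsilon> * r)\<^sup>2 \<le> ee z" using eps r0 by (intro power_mono) auto
    thus "\<epsilon>\<^sup>2 * r\<^sup>2 * pmf ?M z \<le> ee z * pmf ?M z" by (intro mult_right_mono) (auto simp: power_mult_distrib)
  qed
  also have "\<dots> \<le> (\<Sum>z\<in>set_pmf ?M. ee z * pmf ?M z)" by (rule sum_mono2[OF fin]) auto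
  also have "\<dots> = sgg_E E p a0 l" by (simp add: E_sum)
  also have "\<dots> \<le> r\<^sup>2 * ?rho ^ l" using prod_bound[of l] prod_min[OF l] by (simp add: r_def)
  finally have "\<epsilon>\<^sup>2 * r\<^sup>2 * measure_pmf.prob ?M ?S \<le> r\<^sup>2 * ?rho ^ l" .
  hence "\<epsilon>\<^sup>2 * measure_pmf.prob ?M ?S \<le> ?rho ^ l" using r0 by (simp add: mult.commute mult.left_commute)
  thus ?thesis using eps by (simp add: le_divide_eq mult.commute)
qed

end


theorem theorem3:
  fixes E :: "'n::finite \<Rightarrow> 'n \<Rightarrow> bool" and p :: real and a0 :: "real^'n"
  assumes "CARD('n) \<ge> 2" and "connected_graph E"
    and "0 \<le> p" and "p \<le> 1" and "a0 \<noteq> avg_vec a0"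
  shows "\<forall>l\<ge>1.
     sgg_beta E p a0 l \<ge> 0
   \<and> sgg_E E p a0 l \<le> (lambda2 (W_bar E) - sgg_beta E p a0 l) * sgg_E E p a0 (l - 1)
   \<and> sgg_E E p a0 l \<le> (norm (a0 - avg_vec a0))\<^sup>2 * (\<Prod>i=1..l. lambda2 (W_bar E) - sgg_beta E p a0 i)
   \<and> (norm (a0 - avg_vec a0))\<^sup>2 * (\<Prod>i=1..l. lambda2 (W_bar E) - sgg_beta E p a0 i)
       \<le> (norm (a0 - avg_vec a0))\<^sup>2 * (lambda2 (W_bar E) - Min (sgg_beta E p a0 ` {1..l})) ^ l
   \<and> (\<forall>\<epsilon>. 0 < \<epsilon> \<and> \<epsilon> < 1 \<longrightarrow>
        measure_pmf.prob (sgg_dist E p a0 l)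
          {x. norm (x - avg_vec a0) / norm (a0 - avg_vec a0) \<ge> \<epsilon>}
        \<le> (lambda2 (W_bar E) - Min (sgg_beta E p a0 ` {1..l})) ^ l / \<epsilon>\<^sup>2)
   \<and> (\<forall>\<epsilon>. 0 < \<epsilon> \<and> \<epsilon> < 1 \<and> lambda2 (W_bar E) - Min (sgg_beta E p a0 ` {1..l}) > 0
        \<and> real l \<ge> 3 * ln (1 / \<epsilon>) / ln (1 / (lambda2 (W_bar E) - Min (sgg_beta E p a0 ` {1..l})))
        \<longrightarrow> measure_pmf.prob (sgg_dist E p a0 l)
          {x. norm (x - avg_vec a0) / norm (a0 - avg_vec a0) \<ge> \<epsilon>} \<le> \<epsilon>)"
proof (intro allI impI)
  fix l :: nat assume l: "l \<ge> 1"
  note as = assms(1-4)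
  let ?L = "lambda2 (W_bar E)"
  let ?rho = "?L - Min (sgg_beta E p a0 ` {1..l})"
  let ?P = "\<lambda>\<epsilon>. measure_pmf.prob (sgg_dist E p a0 l)
          {x. norm (x - avg_vec a0) / norm (a0 - avg_vec a0) \<ge> \<epsilon>}"
  have mk: "?P \<epsilon> \<le> ?rho ^ l / \<epsilon>\<^sup>2" if "0 < \<epsilon>" for \<epsilon>
    by (rule markov[OF as assms(5) that l])
  have last: "?P \<epsilon> \<le> \<epsilon>" if e: "0 < \<epsilon>" "\<epsilon> < 1" and r: "?rho > 0"
     and ll: "real l \<ge> 3 * ln (1 / \<epsilon>) / ln (1 / ?rho)" for \<epsilon>
  proof -
    have "?rho \<le> ?L" using min_nonneg[OF as l] by simp
    hence r1: "?rho < 1" using L1[OF as] by simp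
    have lnr: "ln (1 / ?rho) > 0" using r r1 by simp
    have "3 * ln (1 / \<epsilon>) \<le> real l * ln (1 / ?rho)" using ll lnr by (simp add: pos_divide_le_eq)
    hence "real l * ln ?rho \<le> 3 * ln \<epsilon>" using r e by (simp add: ln_div)
    hence "ln (?rho ^ l) \<le> ln (\<epsilon> ^ 3)" using r e by (simp add: ln_realpow)
    hence rl: "?rho ^ l \<le> \<epsilon> ^ 3" using r e by simp
    have "?P \<epsilon> \<le> ?rho ^ l / \<epsilon>\<^sup>2" by (rule mk[OF e(1)])
    also have "\<dots> \<le> \<epsilon> ^ 3 / \<epsilon>\<^sup>2" using rl e by (intro divide_right_mono) auto
    also have "\<dots> = \<epsilon>" using e by (simp add: power2_eq_square power3_eq_cube)
    finally show ?thesis .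
  qed
  show "sgg_beta E p a0 l \<ge> 0
   \<and> sgg_E E p a0 l \<le> (?L - sgg_beta E p a0 l) * sgg_E E p a0 (l - 1)
   \<and> sgg_E E p a0 l \<le> (norm (a0 - avg_vec a0))\<^sup>2 * (\<Prod>i=1..l. ?L - sgg_beta E p a0 i)
   \<and> (norm (a0 - avg_vec a0))\<^sup>2 * (\<Prod>i=1..l. ?L - sgg_beta E p a0 i)
       \<le> (norm (a0 - avg_vec a0))\<^sup>2 * ?rho ^ l
   \<and> (\<forall>\<epsilon>. 0 < \<epsilon> \<and> \<epsilon> < 1 \<longrightarrow> ?P \<epsilon> \<le> ?rho ^ l / \<epsilon>\<^sup>2)
   \<and> (\<forall>\<epsilon>. 0 < \<epsilon> \<and> \<epsilon> < 1 \<and> ?rho > 0 \<and> real l \<ge> 3 * ln (1 / \<epsilon>) / ln (1 / ?rho) \<longrightarrow> ?P \<epsilon> \<le> \<epsilon>)"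
    using beta_props(1,2)[OF as l] prod_bound[OF as, where l=l] prod_min[OF as l] mk last by blast
qed


end
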